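(* Let $a<0<b$, $T>0$, and let $W$ be a standard one-dimensional Wiener process with $W(0)=0$. For $h\in(0,1)$ set $\delta=\delta(h)=\sqrt{4h\log(h^{-1})}$ and $\Delta t(x)=h$ if $d(x,\{a,b\})>\delta$, $\Delta t(x)=h^2$ otherwise. Define $t_0=0$, $t_{n+1}=t_n+\Delta t(W(t_n))$, the piecewise constant process $\overline W(t)=W(t_n)$ for $t\in[t_n,t_{n+1})$, the numerical exit time $\nu=\min\{t_n: W(t_n)\notin(a,b)\}\wedge T$, and $\mathrm{Cost}(\overline W)=\int_0^\nu\frac{1}{\Delta t(\overline W(t))}\,\mathrm{d}t$. Let $M_W(t)=\sup_{r\in[0,t]}W(r)$ and, for $m\ge0$, $w\le m$, $t>0$, \[ \rho_t(w,m)=\sqrt{\tfrac{2}{\pi}}\,\frac{2m-w}{t^{3/2}}\exp\!\Big(-\frac{(2m-w)^2}{2t}\Big), \] the joint density of $(W(t),M_W(t))$. Then for all sufficiently small $h>0$, \[ \sup_{(t,w,m)\in[h,T]\times[b-\delta,b)\times[b-\delta,b+\delta]}\rho_t(w,m)<\infty, \] and $\mathbb{E}[\mathrm{Cost}(\overline W)]=\mathcal O(h^{-1}|\log h|)$ as $h\to0$.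
   Context: $d(x,\{a,b\})=\min(|x-a|,|x-b|)$. The scheme above is the order 1 adaptive method specialized to $\mathrm{d}X=\mathrm{d}W$ on the domain $D=(a,b)$, for which the numerical solution coincides with $W$ at the mesh points $t_n$ (each $t_n$ being a stopping time). *)

theory Defs
  imports "HOL-Probability.Probability" "HOL-Library.Landau_Symbols"
begin

definition wiener_process :: "'a measure \<Rightarrow> (real \<Rightarrow> 'a \<Rightarrow> real) \<Rightarrow> bool" where
  "wiener_process M W \<longleftrightarrow>
     prob_space M \<and>
     (\<forall>t\<ge>0. W t \<in> borel_measurable M) \<and>
     (\<forall>\<omega>\<in>space M. W 0 \<omega> = 0) \<and>
     (\<forall>\<omega>\<in>space M. continuous_on {0..} (\<lambda>t. W t \<omega>)) \<and>
     (\<forall>s t. 0 \<le> s \<and> s < t \<longrightarrow>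
        distributed M lborel (\<lambda>\<omega>. W t \<omega> - W s \<omega>)
          (\<lambda>x. ennreal (normal_density 0 (sqrt (t - s)) x))) \<and>
     (\<forall>(ts :: nat \<Rightarrow> real) n. 0 \<le> ts 0 \<and> (\<forall>i<n. ts i < ts (Suc i)) \<longrightarrow>
        prob_space.indep_vars M (\<lambda>_. borel) (\<lambda>i \<omega>. W (ts (Suc i)) \<omega> - W (ts i) \<omega>) {..<n})"

definition delta :: "real \<Rightarrow> real" where
  "delta h = sqrt (4 * h * ln (1 / h))"

definition dist_bd :: "real \<Rightarrow> real \<Rightarrow> real \<Rightarrow> real" where
  "dist_bd a b x = min \<bar>x - a\<bar> \<bar>x - b\<bar>"

definition step :: "real \<Rightarrow> real \<Rightarrow> real \<Rightarrow> real \<Rightarrow> real" where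
  "step a b h x = (if dist_bd a b x > delta h then h else h\<^sup>2)"

primrec tmesh :: "real \<Rightarrow> real \<Rightarrow> (real \<Rightarrow> 'a \<Rightarrow> real) \<Rightarrow> real \<Rightarrow> 'a \<Rightarrow> nat \<Rightarrow> real" where
  "tmesh a b W h \<omega> 0 = 0"
| "tmesh a b W h \<omega> (Suc n) =
     tmesh a b W h \<omega> n + step a b h (W (tmesh a b W h \<omega> n) \<omega>)"

definition Wbar :: "real \<Rightarrow> real \<Rightarrow> (real \<Rightarrow> 'a \<Rightarrow> real) \<Rightarrow> real \<Rightarrow> real \<Rightarrow> 'a \<Rightarrow> real" where
  "Wbar a b W h t \<omega> =
     W (tmesh a b W h \<omega> (THE n. tmesh a b W h \<omega> n \<le> t \<and> t < tmesh a b W h \<omega> (Suc n))) \<omega>"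

definition nu :: "real \<Rightarrow> real \<Rightarrow> real \<Rightarrow> (real \<Rightarrow> 'a \<Rightarrow> real) \<Rightarrow> real \<Rightarrow> 'a \<Rightarrow> real" where
  "nu a b T W h \<omega> =
     (if \<exists>n. W (tmesh a b W h \<omega> n) \<omega> \<notin> {a<..<b}
      then min (Min {tmesh a b W h \<omega> n | n. W (tmesh a b W h \<omega> n) \<omega> \<notin> {a<..<b}
                       \<and> (\<forall>k<n. W (tmesh a b W h \<omega> k) \<omega> \<in> {a<..<b})}) T
      else T)"

definition cost :: "real \<Rightarrow> real \<Rightarrow> real \<Rightarrow> (real \<Rightarrow> 'a \<Rightarrow> real) \<Rightarrow> real \<Rightarrow> 'a \<Rightarrow> real" where
  "cost a b T W h \<omega> =
     (LINT t:{0..nu a b T W h \<omega>}|lborel. 1 / step a b h (Wbar a b W h t \<omega>))"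

definition rho :: "real \<Rightarrow> real \<Rightarrow> real \<Rightarrow> real" where
  "rho t w m = (if 0 \<le> m \<and> w \<le> m then
      sqrt (2 / pi) * (2 * m - w) / t powr (3/2) * exp (- ((2 * m - w)\<^sup>2) / (2 * t))
    else 0)"

end

theory Submission
  imports Defs "HOL-Real_Asymp.Real_Asymp"
begin


lemma nd_exp_eq:
  assumes "0 < \<sigma>"
  shows "normal_density 0 \<sigma> y * exp (\<mu> * y) = exp (\<mu>\<^sup>2 * \<sigma>\<^sup>2 / 2) * normal_density (\<mu> * \<sigma>\<^sup>2) \<sigma> y"
proof -
  have "- (y - 0)\<^sup>2 / (2 * \<sigma>\<^sup>2) + \<mu> * y = \<mu>\<^sup>2 * \<sigma>\<^sup>2 / 2 + (- (y - \<mu> * \<sigma>\<^sup>2)\<^sup>2 / (2 * \<sigma>\<^sup>2))"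
    using assms by (simp add: field_simps power2_eq_square)
  then show ?thesis
    unfolding normal_density_def
    by (simp add: exp_add[symmetric] mult.commute mult.left_commute)
qed

lemma gauss_mgf:
  assumes "0 < \<sigma>"
  shows "integrable lborel (\<lambda>y. normal_density 0 \<sigma> y * exp (\<mu> * y))"
    and "(\<integral>y. normal_density 0 \<sigma> y * exp (\<mu> * y) \<partial>lborel) = exp (\<mu>\<^sup>2 * \<sigma>\<^sup>2 / 2)"
  unfolding nd_exp_eq[OF assms]
  using integrable_normal_density[OF assms, of "\<mu> * \<sigma>\<^sup>2"] integral_normal_density[OF assms, of "\<mu> * \<sigma>\<^sup>2"]
  by auto

lemma sq_le_exp: "0 \<le> x \<Longrightarrow> x\<^sup>2 \<le> 4 * exp (x::real)"
proof -
  assume x: "0 \<le> x"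
  have "1 + x/2 \<le> exp (x/2)" by (rule exp_ge_add_one_self)
  hence "(1 + x/2)\<^sup>2 \<le> (exp (x/2))\<^sup>2" using x by (intro power_mono) auto
  also have "(exp (x/2))\<^sup>2 = exp x" by (simp add: power2_eq_square exp_add[symmetric])
  finally have "(1 + x/2)\<^sup>2 \<le> exp x" .
  moreover have "x\<^sup>2 \<le> 4 * (1 + x/2)\<^sup>2" using x by (simp add: power2_eq_square algebra_simps)
  ultimately show ?thesis by linarith
qed

lemma gauss_tail_pw:
  fixes r s y :: real
  assumes "0 < s" "0 < r" "s \<le> r\<^sup>2"
  shows "y\<^sup>2 * indicator {y. r < \<bar>y\<bar>} y \<le> 4 * r\<^sup>2 * exp (-(r/s - 1/r) * r) * (exp ((r/s) * y) + exp (- (r/s) * y))"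
proof (cases "r < \<bar>y\<bar>")
  case True
  have lam: "0 \<le> r/s - 1/r" using assms
    by (simp add: field_simps power2_eq_square)
  have "(\<bar>y\<bar>/r)\<^sup>2 \<le> 4 * exp (\<bar>y\<bar>/r)" using assms by (intro sq_le_exp) auto
  hence 1: "y\<^sup>2 \<le> 4 * r\<^sup>2 * exp (\<bar>y\<bar>/r)" using assms by (simp add: field_simps power2_eq_square)
  have "0 \<le> (r/s - 1/r) * (\<bar>y\<bar> - r)" using lam True by simp
  hence "exp (\<bar>y\<bar>/r) \<le> exp (\<bar>y\<bar>/r) * exp ((r/s - 1/r) * (\<bar>y\<bar> - r))"
    by (simp add: one_le_exp_iff)
  also have "\<dots> = exp (-(r/s - 1/r) * r) * exp ((r/s) * \<bar>y\<bar>)"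
    unfolding exp_add[symmetric] using assms by (intro arg_cong[where f=exp]) (simp add: field_simps)
  also have "exp ((r/s) * \<bar>y\<bar>) \<le> exp ((r/s) * y) + exp (- (r/s) * y)"
    by (cases "0 \<le> y") (auto simp: add_increasing2 add_increasing)
  finally have "exp (\<bar>y\<bar>/r) \<le> exp (-(r/s - 1/r) * r) * (exp ((r/s) * y) + exp (- (r/s) * y))"
    by (simp add: mult_left_mono)
  with 1 show ?thesis using True
    by (smt (verit, ccfv_SIG) indicator_simps(1) mem_Collect_eq mult.assoc mult_cancel_left1 mult_left_mono zero_le_power2 zero_less_power)
next
  case False
  then show ?thesis by (simp add: indicator_def)
qed

lemma gauss_tail:
  fixes r s :: real
  assumes "0 < s" "0 < r" "s \<le> r\<^sup>2"
  shows "integrable lborel (\<lambda>y. normal_density 0 (sqrt s) y * (y\<^sup>2 * indicator {y. r < \<bar>y\<bar>} y))"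
    and "(\<integral>y. normal_density 0 (sqrt s) y * (y\<^sup>2 * indicator {y. r < \<bar>y\<bar>} y) \<partial>lborel)
          \<le> 8 * exp 1 * r\<^sup>2 * exp (- r\<^sup>2 / (2 * s))"
proof -
  let ?C = "4 * r\<^sup>2 * exp (-(r/s - 1/r) * r)"
  let ?g = "\<lambda>y. normal_density 0 (sqrt s) y * (?C * (exp ((r/s) * y) + exp (- (r/s) * y)))"
  have sq: "0 < sqrt s" using assms by simp
  have i1: "integrable lborel (\<lambda>y. ?C * (normal_density 0 (sqrt s) y * exp ((r/s) * y)))"
      using gauss_mgf(1)[OF sq, of "r/s"] by (rule integrable_mult_right)
  have i2: "integrable lborel (\<lambda>y. ?C * (normal_density 0 (sqrt s) y * exp ((-(r/s)) * y)))"
      using gauss_mgf(1)[OF sq, of "-(r/s)"] by (rule integrable_mult_right)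
  have eq: "?g = (\<lambda>y. ?C * (normal_density 0 (sqrt s) y * exp ((r/s) * y)) + ?C * (normal_density 0 (sqrt s) y * exp ((-(r/s)) * y)))"
      by (rule ext) (simp add: algebra_simps)
  have ig: "integrable lborel ?g" unfolding eq by (rule Bochner_Integration.integrable_add[OF i1 i2])
  have ig_val: "integral\<^sup>L lborel ?g = ?C * (2 * exp ((r/s)\<^sup>2 * s / 2))"
  proof -
    have "integral\<^sup>L lborel ?g = ?C * ((\<integral>y. normal_density 0 (sqrt s) y * exp ((r/s) * y) \<partial>lborel)
          + (\<integral>y. normal_density 0 (sqrt s) y * exp ((-(r/s)) * y) \<partial>lborel))"
      unfolding eq Bochner_Integration.integral_add[OF i1 i2] integral_mult_right_zero by (simp add: distrib_left)
    also have "\<dots> = ?C * (2 * exp ((r/s)\<^sup>2 * s / 2))"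
      using assms unfolding gauss_mgf(2)[OF sq, of "r/s"] gauss_mgf(2)[OF sq, of "-(r/s)"] by simp
    finally show ?thesis .
  qed
  have meas: "(\<lambda>y. normal_density 0 (sqrt s) y * (y\<^sup>2 * indicator {y. r < \<bar>y\<bar>} y)) \<in> borel_measurable lborel"
    by measurable
  have pw: "\<And>y. norm (normal_density 0 (sqrt s) y * (y\<^sup>2 * indicator {y. r < \<bar>y\<bar>} y)) \<le> ?g y"
    using gauss_tail_pw[OF assms] by (simp add: abs_mult mult_left_mono)
  show int: "integrable lborel (\<lambda>y. normal_density 0 (sqrt s) y * (y\<^sup>2 * indicator {y. r < \<bar>y\<bar>} y))"
    by (rule Bochner_Integration.integrable_bound[OF ig meas]) (use pw in auto)
  have "(\<integral>y. normal_density 0 (sqrt s) y * (y\<^sup>2 * indicator {y. r < \<bar>y\<bar>} y) \<partial>lborel) \<le> integral\<^sup>L lborel ?g"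
    by (rule integral_mono[OF int ig]) (use pw in auto)
  also have "\<dots> = 8 * exp 1 * r\<^sup>2 * exp (- r\<^sup>2 / (2 * s))"
  proof -
    have "-(r/s - 1/r) * r + (r/s)\<^sup>2 * s / 2 = 1 + (- r\<^sup>2 / (2 * s))"
      using assms by (simp add: field_simps power2_eq_square)
    hence "exp (-(r/s - 1/r) * r) * exp ((r/s)\<^sup>2 * s / 2) = exp 1 * exp (- r\<^sup>2 / (2 * s))"
      by (simp add: exp_add[symmetric])
    thus ?thesis unfolding ig_val by (simp add: algebra_simps)
  qed
  finally show "(\<integral>y. normal_density 0 (sqrt s) y * (y\<^sup>2 * indicator {y. r < \<bar>y\<bar>} y) \<partial>lborel)
          \<le> 8 * exp 1 * r\<^sup>2 * exp (- r\<^sup>2 / (2 * s))" .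
qed




fun tau :: "real \<Rightarrow> bool list \<Rightarrow> nat \<Rightarrow> real" where
  "tau h p 0 = 0"
| "tau h p (Suc k) = tau h p k + (if k < length p \<and> p ! k then h else h\<^sup>2)"

fun Sv :: "real \<Rightarrow> nat \<Rightarrow> real set" where
  "Sv h 0 = {0}"
| "Sv h (Suc n) = (\<lambda>(x, d). x + d) ` (Sv h n \<times> {h, h\<^sup>2})"

lemma Sv_finite: "finite (Sv h n)"
  by (induction n) auto

lemma Sv_nonneg: "0 \<le> h \<Longrightarrow> c \<in> Sv h n \<Longrightarrow> 0 \<le> c"
  by (induction n arbitrary: c) auto

locale wsetup =
  fixes M :: "'a measure" and W :: "real \<Rightarrow> 'a \<Rightarrow> real" and a b T h :: real
  assumes wp: "wiener_process M W" and a_neg: "a < 0" and b_pos: "0 < b" and T_pos: "0 < T"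
    and h_pos: "0 < h" and h_lt1: "h < 1"
    and small: "4 * delta h < b - a" and dsq: "h \<le> (delta h)\<^sup>2"
begin

sublocale prob_space M using wp unfolding wiener_process_def by auto

lemma W_meas: "0 \<le> c \<Longrightarrow> W c \<in> borel_measurable M"
  using wp unfolding wiener_process_def by auto

lemma W0: "\<omega> \<in> space M \<Longrightarrow> W 0 \<omega> = 0"
  using wp unfolding wiener_process_def by auto

lemma W_distr: "0 \<le> s \<Longrightarrow> s < u \<Longrightarrow>
   distributed M lborel (\<lambda>\<omega>. W u \<omega> - W s \<omega>) (\<lambda>x. ennreal (normal_density 0 (sqrt (u - s)) x))"
  using wp unfolding wiener_process_def by auto

lemma W_indep: "0 \<le> ts 0 \<Longrightarrow> (\<And>i. i < n \<Longrightarrow> ts i < ts (Suc i)) \<Longrightarrow>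
   indep_vars (\<lambda>_. borel) (\<lambda>i \<omega>. W (ts (Suc i)) \<omega> - W (ts i) \<omega>) {..<n}"
  using wp unfolding wiener_process_def by auto

abbreviation "dl \<equiv> delta h"
abbreviation "t \<equiv> tmesh a b W h"
definition "X n \<omega> = W (t \<omega> n) \<omega>"
definition "big x \<longleftrightarrow> dl < dist_bd a b x"

lemma h2_le_h: "h\<^sup>2 \<le> h" using h_pos h_lt1 by (simp add: power2_eq_square)
lemma h2_pos: "0 < h\<^sup>2" using h_pos by simp

lemma dl_pos: "0 < dl"
proof -
  have "0 < ln (1/h)" using h_pos h_lt1 by simp
  thus ?thesis unfolding delta_def using h_pos by simp
qed

lemma step_eq: "step a b h x = (if big x then h else h\<^sup>2)"
  unfolding step_def big_def by simp

lemma step_pos: "0 < step a b h x" using h_pos unfolding step_eq by simp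
lemma step_ge: "h\<^sup>2 \<le> step a b h x" using h2_le_h unfolding step_eq by simp

lemma t_Suc: "t \<omega> (Suc n) = t \<omega> n + step a b h (X n \<omega>)"
  by (simp add: X_def)

lemma t_less: "t \<omega> n < t \<omega> (Suc n)"
  using step_pos t_Suc by simp

lemma t_strict: "strict_mono (t \<omega>)"
  by (rule strict_monoI_Suc) (rule t_less)

lemma t_mono: "m \<le> n \<Longrightarrow> t \<omega> m \<le> t \<omega> n"
  using strict_mono_less_eq[OF t_strict] by simp

lemma t_ge: "real n * h\<^sup>2 \<le> t \<omega> n"
proof (induction n)
  case (Suc n)
  then show ?case using step_ge[of "X n \<omega>"] t_Suc[of \<omega> n] by (simp add: algebra_simps)
qed simp

lemma t_nonneg: "0 \<le> t \<omega> n"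
  using t_ge[of n \<omega>] h2_pos by (smt (verit) of_nat_0_le_iff zero_le_mult_iff)

lemma t_vals: "t \<omega> n \<in> Sv h n"
proof (induction n)
  case (Suc n)
  have "step a b h (X n \<omega>) \<in> {h, h\<^sup>2}" unfolding step_eq by auto
  then show ?case using Suc t_Suc[of \<omega> n] by force
qed simp

lemma meas_W_at:
  assumes f: "f \<in> borel_measurable M" and fS: "\<And>\<omega>. \<omega> \<in> space M \<Longrightarrow> f \<omega> \<in> S" and S: "finite S"
    and S0: "\<And>c. c \<in> S \<Longrightarrow> 0 \<le> c"
  shows "(\<lambda>\<omega>. W (f \<omega>) \<omega>) \<in> borel_measurable M"
proof -
  have "(\<lambda>\<omega>. \<Sum>c\<in>S. indicator {\<omega>\<in>space M. f \<omega> = c} \<omega> * W c \<omega>) \<in> borel_measurable M"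
    using W_meas S0 f by (intro borel_measurable_sum) (auto intro!: borel_measurable_times borel_measurable_indicator)
  moreover have "\<And>\<omega>. \<omega> \<in> space M \<Longrightarrow> (\<Sum>c\<in>S. indicator {\<omega>\<in>space M. f \<omega> = c} \<omega> * W c \<omega>) = W (f \<omega>) \<omega>"
  proof -
    fix \<omega> assume \<omega>: "\<omega> \<in> space M"
    have "(\<Sum>c\<in>S. indicator {\<omega>\<in>space M. f \<omega> = c} \<omega> * W c \<omega>) = (\<Sum>c\<in>S. if c = f \<omega> then W c \<omega> else 0)"
      using \<omega> by (intro sum.cong) (auto simp: indicator_def)
    also have "\<dots> = W (f \<omega>) \<omega>" using S fS[OF \<omega>] by (simp add: sum.delta')
    finally show "?thesis \<omega>" .
  qed
  ultimately show ?thesis by (rule measurable_cong[THEN iffD1, rotated]) (simp)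
qed

lemma meas_t_X: "(\<lambda>\<omega>. t \<omega> n) \<in> borel_measurable M \<and> X n \<in> borel_measurable M"
proof (induction n)
  case 0
  then show ?case using W_meas[of 0] by (simp add: X_def)
next
  case (Suc n)
  from Suc have [measurable]: "(\<lambda>\<omega>. t \<omega> n) \<in> borel_measurable M" "X n \<in> borel_measurable M" by auto
  have tS: "(\<lambda>\<omega>. t \<omega> (Suc n)) \<in> borel_measurable M"
    unfolding t_Suc step_def dist_bd_def by measurable
  moreover have "X (Suc n) \<in> borel_measurable M"
    unfolding X_def
    by (rule meas_W_at[OF tS t_vals Sv_finite]) (metis Sv_nonneg h_pos less_imp_le)
  ultimately show ?case by simp
qed

lemma t_meas[measurable]: "(\<lambda>\<omega>. t \<omega> n) \<in> borel_measurable M"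
  using meas_t_X by blast
lemma X_meas[measurable]: "X n \<in> borel_measurable M"
  using meas_t_X by blast

end



lemma sum_meas: "k \<in> {..m} \<Longrightarrow> (\<lambda>x::nat\<Rightarrow>real. \<Sum>i<k. x i) \<in> measurable (PiM {..<m} (\<lambda>_. borel)) borel"
  by measurable

context wsetup
begin

definition "pth \<omega> n = map (\<lambda>k. big (X k \<omega>)) [0..<n]"

lemma tau_less: "tau h p k < tau h p (Suc k)"
  using h_pos by simp

lemma tau_nonneg: "0 \<le> tau h p k"
  using h_pos by (induction k) auto

lemma length_pth[simp]: "length (pth \<omega> n) = n" by (simp add: pth_def)

lemma t_path: "k \<le> n \<Longrightarrow> t \<omega> k = tau h (pth \<omega> n) k"
proof (induction k)
  case (Suc k)
  then have "k < n" by simp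
  then have "pth \<omega> n ! k = big (X k \<omega>)" by (simp add: pth_def)
  then show ?case using Suc \<open>k < n\<close> t_Suc[of \<omega> k] step_eq by simp
qed simp

lemma X_path: "k \<le> n \<Longrightarrow> X k \<omega> = W (tau h (pth \<omega> n) k) \<omega>"
  using t_path by (simp add: X_def)

lemma path_iff:
  assumes "length p = n"
  shows "pth \<omega> n = p \<longleftrightarrow> (\<forall>k<n. big (W (tau h p k) \<omega>) = p ! k)"
proof
  assume "pth \<omega> n = p"
  then show "\<forall>k<n. big (W (tau h p k) \<omega>) = p ! k"
    using X_path[of _ n \<omega>] by (auto simp: pth_def)
next
  assume H: "\<forall>k<n. big (W (tau h p k) \<omega>) = p ! k"
  have tt: "k \<le> n \<Longrightarrow> t \<omega> k = tau h p k" for k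
  proof (induction k)
    case (Suc k)
    then have "k < n" by simp
    then show ?case using Suc H assms t_Suc[of \<omega> k] step_eq by (simp add: X_def)
  qed simp
  show "pth \<omega> n = p"
    by (rule nth_equalityI) (use assms H tt in \<open>auto simp: pth_def X_def\<close>)
qed

lemma finite_paths: "finite {p :: bool list. length p = n}"
  using finite_lists_length_eq[of "UNIV :: bool set" n] by simp

lemma indep_factor:
  fixes ts :: "nat \<Rightarrow> real" and \<Phi> :: "(nat \<Rightarrow> real) \<Rightarrow> real" and G :: "real \<Rightarrow> real"
  assumes ts0: "ts 0 = 0" and tsinc: "\<And>i. ts i < ts (Suc i)"
    and \<Phi>m: "\<Phi> \<in> borel_measurable (PiM {..m} (\<lambda>_. borel))" and \<Phi>b: "\<And>x. \<bar>\<Phi> x\<bar> \<le> C"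
    and Gm: "G \<in> borel_measurable borel"
    and Gi: "integrable M (\<lambda>\<omega>. G (W (ts (Suc m)) \<omega> - W (ts m) \<omega>))"
  shows "integrable M (\<lambda>\<omega>. \<Phi> (\<lambda>k\<in>{..m}. W (ts k) \<omega>) * G (W (ts (Suc m)) \<omega> - W (ts m) \<omega>))"
    and "(\<integral>\<omega>. \<Phi> (\<lambda>k\<in>{..m}. W (ts k) \<omega>) * G (W (ts (Suc m)) \<omega> - W (ts m) \<omega>) \<partial>M)
         = (\<integral>\<omega>. \<Phi> (\<lambda>k\<in>{..m}. W (ts k) \<omega>) \<partial>M) * (\<integral>\<omega>. G (W (ts (Suc m)) \<omega> - W (ts m) \<omega>) \<partial>M)"
proof -
  define I where "I i \<omega> = W (ts (Suc i)) \<omega> - W (ts i) \<omega>" for i \<omega>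
  have tsnn: "0 \<le> ts i" for i
  proof (induction i)
    case (Suc i) then show ?case using tsinc[of i] by linarith
  qed (simp add: ts0)
  have Im[measurable]: "I i \<in> borel_measurable M" for i
    unfolding I_def using W_meas tsnn by auto
  have ind: "indep_vars (\<lambda>_. borel) I {..<Suc m}"
    unfolding I_def by (rule W_indep) (use ts0 tsinc in auto)
  have iv: "indep_var (PiM {..<m} (\<lambda>_. borel)) (\<lambda>\<omega>. restrict (\<lambda>i. I i \<omega>) {..<m})
              (PiM {m} (\<lambda>_. borel)) (\<lambda>\<omega>. restrict (\<lambda>i. I i \<omega>) {m})"
    by (rule indep_var_restrict[OF ind]) auto
  define Y1 where "Y1 x = \<Phi> (\<lambda>k\<in>{..m}. \<Sum>i<k. x i)" for x :: "nat \<Rightarrow> real"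
  define Y2 where "Y2 x = G (x m)" for x :: "nat \<Rightarrow> real"
  have Y1m: "Y1 \<in> borel_measurable (PiM {..<m} (\<lambda>_. borel))"
  proof -
    have "(\<lambda>x::nat\<Rightarrow>real. \<lambda>k\<in>{..m}. \<Sum>i<k. x i) \<in> measurable (PiM {..<m} (\<lambda>_. borel)) (PiM {..m} (\<lambda>_. borel))"
    proof (rule measurable_restrict)
      fix k assume "k \<in> {..m}"
      then show "(\<lambda>x::nat\<Rightarrow>real. \<Sum>i<k. x i) \<in> measurable (PiM {..<m} (\<lambda>_. borel)) borel"
        by (rule sum_meas)
    qed
    from measurable_compose[OF this \<Phi>m] show ?thesis unfolding Y1_def by simp
  qed
  have Y2m: "Y2 \<in> borel_measurable (PiM {m} (\<lambda>_. borel))"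
    unfolding Y2_def using Gm by (intro measurable_compose[OF measurable_component_singleton]) auto
  have iv2: "indep_var borel (Y1 \<circ> (\<lambda>\<omega>. restrict (\<lambda>i. I i \<omega>) {..<m})) borel (Y2 \<circ> (\<lambda>\<omega>. restrict (\<lambda>i. I i \<omega>) {m}))"
    by (rule indep_var_compose[OF iv Y1m Y2m])
  have e1: "(Y1 \<circ> (\<lambda>\<omega>. restrict (\<lambda>i. I i \<omega>) {..<m})) = (\<lambda>\<omega>. \<Phi> (\<lambda>k\<in>{..m}. W (ts k) \<omega> - W 0 \<omega>))"
  proof
    fix \<omega>
    have "(\<lambda>k\<in>{..m}. \<Sum>i<k. restrict (\<lambda>i. I i \<omega>) {..<m} i) = (\<lambda>k\<in>{..m}. W (ts k) \<omega> - W 0 \<omega>)"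
    proof (rule restrict_ext)
      fix k assume "k \<in> {..m}"
      then have "(\<Sum>i<k. restrict (\<lambda>i. I i \<omega>) {..<m} i) = (\<Sum>i<k. I i \<omega>)" by (intro sum.cong) auto
      also have "\<dots> = W (ts k) \<omega> - W 0 \<omega>"
        unfolding I_def using sum_lessThan_telescope[of "\<lambda>i. W (ts i) \<omega>" k] ts0 by simp
      finally show "(\<Sum>i<k. restrict (\<lambda>i. I i \<omega>) {..<m} i) = W (ts k) \<omega> - W 0 \<omega>" .
    qed
    then show "(Y1 \<circ> (\<lambda>\<omega>. restrict (\<lambda>i. I i \<omega>) {..<m})) \<omega> = \<Phi> (\<lambda>k\<in>{..m}. W (ts k) \<omega> - W 0 \<omega>)"
      by (simp add: Y1_def)
  qed
  have e2: "(Y2 \<circ> (\<lambda>\<omega>. restrict (\<lambda>i. I i \<omega>) {m})) = (\<lambda>\<omega>. G (W (ts (Suc m)) \<omega> - W (ts m) \<omega>))"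
    by (auto simp: Y2_def I_def)
  have Xm: "(\<lambda>\<omega>. restrict (\<lambda>i. I i \<omega>) {..<m}) \<in> measurable M (PiM {..<m} (\<lambda>_. borel))"
    by (rule measurable_restrict) auto
  have i1: "integrable M (\<lambda>\<omega>. \<Phi> (\<lambda>k\<in>{..m}. W (ts k) \<omega> - W 0 \<omega>))"
  proof (rule integrable_const_bound[where B=C])
    show "AE x in M. norm (\<Phi> (\<lambda>k\<in>{..m}. W (ts k) x - W 0 x)) \<le> C" using \<Phi>b by simp
    show "(\<lambda>\<omega>. \<Phi> (\<lambda>k\<in>{..m}. W (ts k) \<omega> - W 0 \<omega>)) \<in> borel_measurable M"
      unfolding e1[symmetric] by (rule measurable_comp[OF Xm Y1m])
  qed
  have cong: "\<And>\<omega>. \<omega> \<in> space M \<Longrightarrow> (\<lambda>k\<in>{..m}. W (ts k) \<omega> - W 0 \<omega>) = (\<lambda>k\<in>{..m}. W (ts k) \<omega>)"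
    using W0 by auto
  note L = indep_var_lebesgue_integral[OF iv2, unfolded e1 e2, OF i1 Gi]
  note LI = indep_var_integrable[OF iv2, unfolded e1 e2, OF i1 Gi]
  show "integrable M (\<lambda>\<omega>. \<Phi> (\<lambda>k\<in>{..m}. W (ts k) \<omega>) * G (W (ts (Suc m)) \<omega> - W (ts m) \<omega>))"
    by (rule Bochner_Integration.integrable_cong[OF refl, THEN iffD1, OF _ LI]) (simp add: cong)
  have "(\<integral>\<omega>. \<Phi> (\<lambda>k\<in>{..m}. W (ts k) \<omega>) * G (W (ts (Suc m)) \<omega> - W (ts m) \<omega>) \<partial>M)
      = (\<integral>\<omega>. \<Phi> (\<lambda>k\<in>{..m}. W (ts k) \<omega> - W 0 \<omega>) * G (W (ts (Suc m)) \<omega> - W (ts m) \<omega>) \<partial>M)"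
    by (rule Bochner_Integration.integral_cong) (simp_all add: cong)
  also have "\<dots> = (\<integral>\<omega>. \<Phi> (\<lambda>k\<in>{..m}. W (ts k) \<omega> - W 0 \<omega>) \<partial>M) * (\<integral>\<omega>. G (W (ts (Suc m)) \<omega> - W (ts m) \<omega>) \<partial>M)"
    by (rule L)
  also have "(\<integral>\<omega>. \<Phi> (\<lambda>k\<in>{..m}. W (ts k) \<omega> - W 0 \<omega>) \<partial>M) = (\<integral>\<omega>. \<Phi> (\<lambda>k\<in>{..m}. W (ts k) \<omega>) \<partial>M)"
    by (rule Bochner_Integration.integral_cong) (simp_all add: cong)
  finally show "(\<integral>\<omega>. \<Phi> (\<lambda>k\<in>{..m}. W (ts k) \<omega>) * G (W (ts (Suc m)) \<omega> - W (ts m) \<omega>) \<partial>M)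
         = (\<integral>\<omega>. \<Phi> (\<lambda>k\<in>{..m}. W (ts k) \<omega>) \<partial>M) * (\<integral>\<omega>. G (W (ts (Suc m)) \<omega> - W (ts m) \<omega>) \<partial>M)" .
qed


definition "sp p n = (if p ! n then h else h\<^sup>2)"

lemma sp_in: "sp p n \<in> {h, h\<^sup>2}" by (simp add: sp_def)

lemma tau_diff: "n < length p \<Longrightarrow> tau h p (Suc n) - tau h p n = sp p n"
  by (simp add: sp_def)

lemma L1:
  fixes F :: "(nat \<Rightarrow> real) \<Rightarrow> real \<Rightarrow> real \<Rightarrow> real"
  assumes "length p = Suc n"
  shows "(if pth \<omega> (Suc n) = p then F (\<lambda>k\<in>{..n}. X k \<omega>) (X (Suc n) \<omega> - X n \<omega>) (step a b h (X n \<omega>)) else 0)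
       = (if \<forall>k<Suc n. big (W (tau h p k) \<omega>) = p ! k then 1 else 0) *
          F (\<lambda>k\<in>{..n}. W (tau h p k) \<omega>) (W (tau h p (Suc n)) \<omega> - W (tau h p n) \<omega>) (sp p n)"
proof (cases "pth \<omega> (Suc n) = p")
  case True
  have Xk: "k \<le> Suc n \<Longrightarrow> X k \<omega> = W (tau h p k) \<omega>" for k
    using X_path[of k "Suc n" \<omega>] True by simp
  have "step a b h (X n \<omega>) = t \<omega> (Suc n) - t \<omega> n" using t_Suc by simp
  also have "\<dots> = tau h p (Suc n) - tau h p n"
    using t_path[of "Suc n" "Suc n" \<omega>] t_path[of n "Suc n" \<omega>] True by (simp del: tau.simps)
  also have "\<dots> = sp p n" using assms by (intro tau_diff) simp
  finally have st: "step a b h (X n \<omega>) = sp p n" .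
  have r: "(\<lambda>k\<in>{..n}. X k \<omega>) = (\<lambda>k\<in>{..n}. W (tau h p k) \<omega>)"
    using Xk by (intro restrict_ext) auto
  show ?thesis using True path_iff[OF assms, of \<omega>] Xk[of "Suc n"] Xk[of n] st r by (simp del: tau.simps)
next
  case False
  have c: "\<not> (\<forall>k<Suc n. big (W (tau h p k) \<omega>) = p ! k)" using False path_iff[OF assms, of \<omega>] by blast
  show ?thesis by (simp only: if_not_P[OF False] if_not_P[OF c] mult_zero_left)
qed

lemma L2: "(e::real) = (\<Sum>p\<in>{p. length p = Suc n}. if pth \<omega> (Suc n) = p then e else 0)"
proof -
  have "(\<Sum>p\<in>{p. length p = Suc n}. if pth \<omega> (Suc n) = p then e else 0)
      = (\<Sum>p\<in>{p. length p = Suc n}. if p = pth \<omega> (Suc n) then e else 0)"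
    by (intro sum.cong) auto
  also have "\<dots> = e" using finite_paths by (simp add: sum.delta')
  finally show ?thesis by simp
qed

lemma cond_step:
  fixes \<Phi> :: "(nat \<Rightarrow> real) \<Rightarrow> real" and G :: "real \<Rightarrow> real"
  assumes \<Phi>m: "\<Phi> \<in> borel_measurable (PiM {..n} (\<lambda>_. borel))" and \<Phi>b: "\<And>x. \<bar>\<Phi> x\<bar> \<le> C"
    and Gm: "G \<in> borel_measurable borel"
    and Gi: "\<And>s. s \<in> {h, h\<^sup>2} \<Longrightarrow> integrable lborel (\<lambda>y. normal_density 0 (sqrt s) y * G y)"
  shows "integrable M (\<lambda>\<omega>. \<Phi> (\<lambda>k\<in>{..n}. X k \<omega>) * G (X (Suc n) \<omega> - X n \<omega>))"
    and "integrable M (\<lambda>\<omega>. \<Phi> (\<lambda>k\<in>{..n}. X k \<omega>) * (\<integral>y. normal_density 0 (sqrt (step a b h (X n \<omega>))) y * G y \<partial>lborel))"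
    and "(\<integral>\<omega>. \<Phi> (\<lambda>k\<in>{..n}. X k \<omega>) * G (X (Suc n) \<omega> - X n \<omega>) \<partial>M)
       = (\<integral>\<omega>. \<Phi> (\<lambda>k\<in>{..n}. X k \<omega>) * (\<integral>y. normal_density 0 (sqrt (step a b h (X n \<omega>))) y * G y \<partial>lborel) \<partial>M)"
proof -
  define P where "P = {p :: bool list. length p = Suc n}"
  have Pf: "finite P" unfolding P_def by (rule finite_paths)
  define mG where "mG s = (\<integral>y. normal_density 0 (sqrt s) y * G y \<partial>lborel)" for s
  define \<Psi> where "\<Psi> p v = (if \<forall>k<Suc n. big (v k) = p ! k then 1 else 0) * \<Phi> v" for p and v :: "nat \<Rightarrow> real"
  have \<Psi>_eq: "\<Psi> p v = (\<Prod>k\<in>{..n}. if big (v k) = p ! k then 1 else 0) * \<Phi> v" for p v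
    unfolding \<Psi>_def by (auto simp: less_Suc_eq_le)
  have \<Psi>m: "\<Psi> p \<in> borel_measurable (PiM {..n} (\<lambda>_. borel))" for p
  proof -
    have "(\<lambda>v::nat\<Rightarrow>real. if big (v k) = p ! k then 1 else 0 :: real) \<in> borel_measurable (PiM {..n} (\<lambda>_. borel))"
      if "k \<in> {..n}" for k
      using that unfolding big_def dist_bd_def by measurable
    then show ?thesis unfolding \<Psi>_eq[abs_def] using \<Phi>m by measurable
  qed
  have \<Psi>b: "\<bar>\<Psi> p v\<bar> \<le> C" for p v using \<Phi>b[of v] unfolding \<Psi>_def by auto
  have inc: "tau h p i < tau h p (Suc i)" for p i by (rule tau_less)
  have Gip: "integrable M (\<lambda>\<omega>. G (W (tau h p (Suc n)) \<omega> - W (tau h p n) \<omega>))"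
    and EG: "(\<integral>\<omega>. G (W (tau h p (Suc n)) \<omega> - W (tau h p n) \<omega>) \<partial>M) = mG (sp p n)"
    if "p \<in> P" for p
  proof -
    have len: "n < length p" using that by (simp add: P_def)
    have D: "distributed M lborel (\<lambda>\<omega>. W (tau h p (Suc n)) \<omega> - W (tau h p n) \<omega>)
        (\<lambda>x. ennreal (normal_density 0 (sqrt (sp p n)) x))"
      using W_distr[OF tau_nonneg inc[of p n]] tau_diff[OF len] by simp
    show "integrable M (\<lambda>\<omega>. G (W (tau h p (Suc n)) \<omega> - W (tau h p n) \<omega>))"
      using distributed_integrable[OF D, of G] Gm Gi[OF sp_in] by simp
    show "(\<integral>\<omega>. G (W (tau h p (Suc n)) \<omega> - W (tau h p n) \<omega>) \<partial>M) = mG (sp p n)"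
      using distributed_integral[OF D, of G] Gm unfolding mG_def by simp
  qed
  note IF1 = indep_factor(1)[OF tau.simps(1) inc \<Psi>m \<Psi>b Gm Gip]
  note IF2 = indep_factor(2)[OF tau.simps(1) inc \<Psi>m \<Psi>b Gm Gip]
  have mW: "(\<lambda>\<omega>. \<lambda>k\<in>{..n}. W (tau h p k) \<omega>) \<in> measurable M (PiM {..n} (\<lambda>_. borel))" for p
    by (rule measurable_restrict) (use W_meas tau_nonneg in auto)
  have mX: "(\<lambda>\<omega>. \<lambda>k\<in>{..n}. X k \<omega>) \<in> measurable M (PiM {..n} (\<lambda>_. borel))"
    by (rule measurable_restrict) auto
  have \<Psi>int: "integrable M (\<lambda>\<omega>. \<Psi> p (\<lambda>k\<in>{..n}. W (tau h p k) \<omega>) * c)" for p c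
  proof (rule integrable_mult_left, rule integrable_const_bound[where B=C])
    show "AE x in M. norm (\<Psi> p (\<lambda>k\<in>{..n}. W (tau h p k) x)) \<le> C" using \<Psi>b by simp
    show "(\<lambda>\<omega>. \<Psi> p (\<lambda>k\<in>{..n}. W (tau h p k) \<omega>)) \<in> borel_measurable M"
      by (rule measurable_compose[OF mW \<Psi>m])
  qed
  have rc: "(\<forall>k<Suc n. big ((\<lambda>k\<in>{..n}. W (tau h p k) \<omega>) k) = p ! k) = (\<forall>k<Suc n. big (W (tau h p k) \<omega>) = p ! k)" for p \<omega>
    by (auto simp: less_Suc_eq_le)
  have dec1: "\<Phi> (\<lambda>k\<in>{..n}. X k \<omega>) * G (X (Suc n) \<omega> - X n \<omega>)
      = (\<Sum>p\<in>P. \<Psi> p (\<lambda>k\<in>{..n}. W (tau h p k) \<omega>) * G (W (tau h p (Suc n)) \<omega> - W (tau h p n) \<omega>))" for \<omega>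
  proof -
    have "\<Phi> (\<lambda>k\<in>{..n}. X k \<omega>) * G (X (Suc n) \<omega> - X n \<omega>)
       = (\<Sum>p\<in>P. if pth \<omega> (Suc n) = p then \<Phi> (\<lambda>k\<in>{..n}. X k \<omega>) * G (X (Suc n) \<omega> - X n \<omega>) else 0)"
      unfolding P_def by (rule L2)
    also have "\<dots> = (\<Sum>p\<in>P. \<Psi> p (\<lambda>k\<in>{..n}. W (tau h p k) \<omega>) * G (W (tau h p (Suc n)) \<omega> - W (tau h p n) \<omega>))"
    proof (rule sum.cong[OF refl])
      fix p assume "p \<in> P"
      then have len: "length p = Suc n" by (simp add: P_def)
      show "(if pth \<omega> (Suc n) = p then \<Phi> (\<lambda>k\<in>{..n}. X k \<omega>) * G (X (Suc n) \<omega> - X n \<omega>) else 0)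
          = \<Psi> p (\<lambda>k\<in>{..n}. W (tau h p k) \<omega>) * G (W (tau h p (Suc n)) \<omega> - W (tau h p n) \<omega>)"
        using L1[OF len, where F="\<lambda>v y s. \<Phi> v * G y" and \<omega>=\<omega>] by (simp only: \<Psi>_def mult.assoc rc)
    qed
    finally show ?thesis .
  qed
  have dec2: "\<Phi> (\<lambda>k\<in>{..n}. X k \<omega>) * mG (step a b h (X n \<omega>))
      = (\<Sum>p\<in>P. \<Psi> p (\<lambda>k\<in>{..n}. W (tau h p k) \<omega>) * mG (sp p n))" for \<omega>
  proof -
    have "\<Phi> (\<lambda>k\<in>{..n}. X k \<omega>) * mG (step a b h (X n \<omega>))
       = (\<Sum>p\<in>P. if pth \<omega> (Suc n) = p then \<Phi> (\<lambda>k\<in>{..n}. X k \<omega>) * mG (step a b h (X n \<omega>)) else 0)"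
      unfolding P_def by (rule L2)
    also have "\<dots> = (\<Sum>p\<in>P. \<Psi> p (\<lambda>k\<in>{..n}. W (tau h p k) \<omega>) * mG (sp p n))"
    proof (rule sum.cong[OF refl])
      fix p assume "p \<in> P"
      then have len: "length p = Suc n" by (simp add: P_def)
      show "(if pth \<omega> (Suc n) = p then \<Phi> (\<lambda>k\<in>{..n}. X k \<omega>) * mG (step a b h (X n \<omega>)) else 0)
          = \<Psi> p (\<lambda>k\<in>{..n}. W (tau h p k) \<omega>) * mG (sp p n)"
        using L1[OF len, where F="\<lambda>v y s. \<Phi> v * mG s" and \<omega>=\<omega>] by (simp only: \<Psi>_def mult.assoc rc)
    qed
    finally show ?thesis .
  qed
  show i1: "integrable M (\<lambda>\<omega>. \<Phi> (\<lambda>k\<in>{..n}. X k \<omega>) * G (X (Suc n) \<omega> - X n \<omega>))"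
    unfolding dec1 by (intro Bochner_Integration.integrable_sum IF1) (simp add: P_def)
  show i2: "integrable M (\<lambda>\<omega>. \<Phi> (\<lambda>k\<in>{..n}. X k \<omega>) * (\<integral>y. normal_density 0 (sqrt (step a b h (X n \<omega>))) y * G y \<partial>lborel))"
    unfolding mG_def[symmetric] dec2 by (intro Bochner_Integration.integrable_sum \<Psi>int)
  have "(\<integral>\<omega>. \<Phi> (\<lambda>k\<in>{..n}. X k \<omega>) * G (X (Suc n) \<omega> - X n \<omega>) \<partial>M)
      = (\<Sum>p\<in>P. (\<integral>\<omega>. \<Psi> p (\<lambda>k\<in>{..n}. W (tau h p k) \<omega>) * G (W (tau h p (Suc n)) \<omega> - W (tau h p n) \<omega>) \<partial>M))"
    unfolding dec1 by (intro Bochner_Integration.integral_sum IF1) (simp add: P_def)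
  also have "\<dots> = (\<Sum>p\<in>P. (\<integral>\<omega>. \<Psi> p (\<lambda>k\<in>{..n}. W (tau h p k) \<omega>) * mG (sp p n) \<partial>M))"
  proof (rule sum.cong[OF refl])
    fix p assume p: "p \<in> P"
    show "(\<integral>\<omega>. \<Psi> p (\<lambda>k\<in>{..n}. W (tau h p k) \<omega>) * G (W (tau h p (Suc n)) \<omega> - W (tau h p n) \<omega>) \<partial>M)
        = (\<integral>\<omega>. \<Psi> p (\<lambda>k\<in>{..n}. W (tau h p k) \<omega>) * mG (sp p n) \<partial>M)"
      unfolding IF2[OF p] EG[OF p] by simp
  qed
  also have "\<dots> = (\<integral>\<omega>. \<Phi> (\<lambda>k\<in>{..n}. X k \<omega>) * mG (step a b h (X n \<omega>)) \<partial>M)"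
    unfolding dec2 by (intro Bochner_Integration.integral_sum[symmetric] \<Psi>int)
  finally show "(\<integral>\<omega>. \<Phi> (\<lambda>k\<in>{..n}. X k \<omega>) * G (X (Suc n) \<omega> - X n \<omega>) \<partial>M)
       = (\<integral>\<omega>. \<Phi> (\<lambda>k\<in>{..n}. X k \<omega>) * (\<integral>y. normal_density 0 (sqrt (step a b h (X n \<omega>))) y * G y \<partial>lborel) \<partial>M)"
    unfolding mG_def .
qed

end



lemma sq1:
  fixes u y d :: real
  assumes "u < 2*d" "0 < d"
  shows "(max 0 u)\<^sup>2 + 2 * max 0 u * y + (if d \<le> u \<and> \<bar>y\<bar> \<le> d then y\<^sup>2 else 0) - 9 * (if d < \<bar>y\<bar> then y\<^sup>2 else 0)
     \<le> min ((max 0 (u + y))\<^sup>2) (9 * d\<^sup>2)"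
proof -
  have c1: "(max 0 u)\<^sup>2 + 2 * max 0 u * y \<le> (max 0 (u + y))\<^sup>2"
  proof (cases "0 \<le> u")
    case True
    then show ?thesis
    proof (cases "0 \<le> u + y")
      case True
      then show ?thesis using \<open>0 \<le> u\<close> by (simp add: power2_eq_square algebra_simps)
    next
      case False
      then have "u * (u + 2 * y) \<le> 0" using \<open>0 \<le> u\<close> by (intro mult_nonneg_nonpos) auto
      then show ?thesis using False \<open>0 \<le> u\<close> by (simp add: power2_eq_square algebra_simps)
    qed
  qed simp
  have c2: "d \<le> u \<Longrightarrow> \<bar>y\<bar> \<le> d \<Longrightarrow> (max 0 u)\<^sup>2 + 2 * max 0 u * y + y\<^sup>2 = (max 0 (u + y))\<^sup>2"
    by (simp add: power2_eq_square algebra_simps)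
  have c3: "9 * d\<^sup>2 < (max 0 (u + y))\<^sup>2 \<Longrightarrow> d < y \<and> (max 0 (u + y))\<^sup>2 \<le> 9 * y\<^sup>2"
  proof -
    assume H: "9 * d\<^sup>2 < (max 0 (u + y))\<^sup>2"
    have "(3 * d)\<^sup>2 < (max 0 (u + y))\<^sup>2" using H by (simp add: power2_eq_square)
    hence "3 * d < max 0 (u + y)" using assms by (smt (verit) power_mono)
    hence y: "d < y" using assms by linarith
    have "(max 0 (u + y))\<^sup>2 \<le> (3 * y)\<^sup>2" using \<open>3 * d < max 0 (u + y)\<close> assms y
      by (intro power_mono) auto
    thus ?thesis using y by (simp add: power2_eq_square)
  qed
  show ?thesis
  proof (cases "9 * d\<^sup>2 < (max 0 (u + y))\<^sup>2")
    case True
    with c3 have y: "d < y" "(max 0 (u + y))\<^sup>2 \<le> 9 * y\<^sup>2" by auto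
    have "0 \<le> d\<^sup>2" by simp
    then have "(max 0 u)\<^sup>2 + 2 * max 0 u * y - 9 * y\<^sup>2 \<le> 9 * d\<^sup>2" using c1 y by linarith
    then show ?thesis using y True by (auto simp: min_def)
  next
    case False
    have e1: "(max 0 u)\<^sup>2 + 2 * max 0 u * y - 9 * y\<^sup>2 \<le> (max 0 (u + y))\<^sup>2"
      using c1 zero_le_power2[of y] by linarith
    have e2: "(max 0 u)\<^sup>2 + 2 * max 0 u * y + y\<^sup>2 - 9 * y\<^sup>2 \<le> (max 0 (u + y))\<^sup>2"
      using c1 zero_le_power2[of y] by linarith
    show ?thesis using c1 c2 False e1 e2 by (auto simp: min_def)
  qed
qed

context wsetup
begin

definition "Qa x = (max 0 (a + 2*dl - x))\<^sup>2"
definition "Qb x = (max 0 (x - (b - 2*dl)))\<^sup>2"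
definition "phi x = min (Qa x) (9*dl\<^sup>2) + min (Qb x) (9*dl\<^sup>2)"
definition "Lp x = -2 * max 0 (a + 2*dl - x) + 2 * max 0 (x - (b - 2*dl))"
definition "insd x \<longleftrightarrow> a < x \<and> x < b"
definition "Rt y = (if dl < \<bar>y\<bar> then y\<^sup>2 else 0)"

lemma phi_nonneg: "0 \<le> phi x" unfolding phi_def Qa_def Qb_def by simp
lemma phi_le: "phi x \<le> 18 * dl\<^sup>2" unfolding phi_def by linarith
lemma Rt_nonneg: "0 \<le> Rt y" unfolding Rt_def by simp

lemma phi_pw:
  assumes "insd x"
  shows "phi x + Lp x * y + (if big x then 0 else y\<^sup>2) - 19 * Rt y \<le> phi (x + y)"
proof -
  have xa: "a < x" and xb: "x < b" using assms by (auto simp: insd_def)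
  define u where "u = x - (b - 2*dl)"
  define v where "v = a + 2*dl - x"
  have u2: "u < 2*dl" and v2: "v < 2*dl" using xa xb by (auto simp: u_def v_def)
  have B: "(max 0 u)\<^sup>2 + 2 * max 0 u * y + (if dl \<le> u \<and> \<bar>y\<bar> \<le> dl then y\<^sup>2 else 0) - 9 * Rt y
     \<le> min (Qb (x+y)) (9 * dl\<^sup>2)"
  proof -
    have e1: "(max 0 (u + y))\<^sup>2 = Qb (x+y)" by (simp add: Qb_def u_def algebra_simps)
    have e2: "(if dl < \<bar>y\<bar> then y\<^sup>2 else 0) = Rt y" by (simp add: Rt_def)
    show ?thesis using sq1[OF u2 dl_pos, of y] unfolding e1 e2 .
  qed
  have A: "(max 0 v)\<^sup>2 + 2 * max 0 v * (-y) + (if dl \<le> v \<and> \<bar>-y\<bar> \<le> dl then (-y)\<^sup>2 else 0) - 9 * Rt y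
     \<le> min (Qa (x+y)) (9 * dl\<^sup>2)"
  proof -
    have e1: "(max 0 (v + -y))\<^sup>2 = Qa (x+y)" by (simp add: Qa_def v_def algebra_simps)
    have e2: "(if dl < \<bar>-y\<bar> then (-y)\<^sup>2 else 0) = Rt y" by (simp add: Rt_def)
    show ?thesis using sq1[OF v2 dl_pos, of "-y"] unfolding e1 e2 .
  qed
  have mu: "(max 0 u)\<^sup>2 \<le> (2*dl)\<^sup>2" using u2 dl_pos by (intro power_mono) auto
  have mv: "(max 0 v)\<^sup>2 \<le> (2*dl)\<^sup>2" using v2 dl_pos by (intro power_mono) auto
  have d49: "(2*dl)\<^sup>2 \<le> 9*dl\<^sup>2" by (simp add: power2_eq_square)
  have qa: "Qa x = (max 0 v)\<^sup>2" unfolding Qa_def v_def by (rule refl)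
  have qb: "Qb x = (max 0 u)\<^sup>2" unfolding Qb_def u_def by (rule refl)
  have phx: "phi x = (max 0 v)\<^sup>2 + (max 0 u)\<^sup>2"
  proof -
    have "(max 0 v)\<^sup>2 \<le> 9*dl\<^sup>2" "(max 0 u)\<^sup>2 \<le> 9*dl\<^sup>2" using mu mv d49 by linarith+
    then show ?thesis unfolding phi_def qa qb by (simp only: min_absorb1)
  qed
  have Lpx: "Lp x * y = 2 * max 0 v * (-y) + 2 * max 0 u * y"
    unfolding Lp_def u_def v_def by (simp add: algebra_simps)
  have ifs: "(if big x then 0 else y\<^sup>2) - Rt y \<le> (if dl \<le> u \<and> \<bar>y\<bar> \<le> dl then y\<^sup>2 else 0)
      + (if dl \<le> v \<and> \<bar>-y\<bar> \<le> dl then (-y)\<^sup>2 else 0)"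
  proof (cases "big x")
    case True then show ?thesis using Rt_nonneg[of y] zero_le_power2[of y] power2_minus[of y] by (smt (verit))
  next
    case False
    then have "dist_bd a b x \<le> dl" unfolding big_def by simp
    then have "x - a \<le> dl \<or> b - x \<le> dl" using xa xb unfolding dist_bd_def by auto
    then have uv: "dl \<le> u \<or> dl \<le> v" unfolding u_def v_def by auto
    show ?thesis
    proof (cases "\<bar>y\<bar> \<le> dl")
      case True
      then show ?thesis using uv False by (auto simp: Rt_def)
    next
      case F2: False
      then show ?thesis using False by (auto simp: Rt_def)
    qed
  qed
  have "phi (x + y) = min (Qa (x+y)) (9 * dl\<^sup>2) + min (Qb (x+y)) (9 * dl\<^sup>2)" by (simp add: phi_def)
  then show ?thesis using A B phx Lpx ifs by linarith
qed

end



context wsetup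
begin

lemma int_bdd: "(f::'a\<Rightarrow>real) \<in> borel_measurable M \<Longrightarrow> (\<And>\<omega>. \<omega> \<in> space M \<Longrightarrow> \<bar>f \<omega>\<bar> \<le> B) \<Longrightarrow> integrable M f"
  by (rule integrable_const_bound[where B=B]) auto

definition "Bn n \<omega> \<longleftrightarrow> (\<forall>k\<le>n. insd (X k \<omega>))"
definition "ib n \<omega> = (if Bn n \<omega> then 1 else 0 :: real)"
definition "IB (n::nat) (v::nat\<Rightarrow>real) = (\<Prod>k\<in>{..n}. if insd (v k) then 1 else (0::real))"

lemma prod01: "finite A \<Longrightarrow> (\<Prod>k\<in>A. if P k then 1 else (0::real)) = (if \<forall>k\<in>A. P k then 1 else 0)"
  by (induction A rule: finite_induct) auto

lemma IB_alt: "IB n v = (if \<forall>k\<in>{..n}. insd (v k) then 1 else 0)"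
  unfolding IB_def by (rule prod01) simp

lemma IB_eq: "IB n (\<lambda>k\<in>{..n}. X k \<omega>) = ib n \<omega>"
  unfolding IB_alt ib_def Bn_def by (auto simp: atMost_iff)

lemma IB_01: "IB n v = 0 \<or> IB n v = 1"
  unfolding IB_alt by auto

lemma IB_1: "IB n v \<noteq> 0 \<Longrightarrow> insd (v n)"
  unfolding IB_alt by (auto split: if_splits)

lemma IB_meas[measurable]: "IB n \<in> borel_measurable (PiM {..n} (\<lambda>_. borel))"
proof -
  have "(\<lambda>v::nat\<Rightarrow>real. if insd (v k) then 1 else 0 :: real) \<in> borel_measurable (PiM {..n} (\<lambda>_. borel))"
    if "k \<in> {..n}" for k
    using that unfolding insd_def by measurable
  then show ?thesis unfolding IB_def[abs_def] by measurable
qed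

lemma ib_meas[measurable]: "ib n \<in> borel_measurable M"
proof -
  have "(\<lambda>\<omega>. \<lambda>k\<in>{..n}. X k \<omega>) \<in> measurable M (PiM {..n} (\<lambda>_. borel))"
    by (rule measurable_restrict) auto
  from measurable_compose[OF this IB_meas] show ?thesis unfolding IB_eq .
qed

lemma ib_01: "ib n \<omega> = 0 \<or> ib n \<omega> = 1" unfolding ib_def by auto

lemma ib_mono: "ib (Suc n) \<omega> \<le> ib n \<omega>"
  unfolding ib_def Bn_def by auto

lemma Lp_bound: "insd x \<Longrightarrow> \<bar>Lp x\<bar> \<le> 8 * dl"
  unfolding Lp_def insd_def using dl_pos by (auto simp: max_def abs_if)

lemma Lp_meas[measurable]: "Lp \<in> borel_measurable borel" unfolding Lp_def[abs_def] by measurable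
lemma phi_meas[measurable]: "phi \<in> borel_measurable borel" unfolding phi_def[abs_def] Qa_def Qb_def by measurable
lemma Rt_meas[measurable]: "Rt \<in> borel_measurable borel" unfolding Rt_def[abs_def] by measurable
lemma big_meas[measurable]: "Measurable.pred borel big" unfolding big_def[abs_def] dist_bd_def by measurable

definition "gstar = 8 * exp 1 * dl\<^sup>2 * h\<^sup>2"

lemma sq_s: "s \<in> {h, h\<^sup>2} \<Longrightarrow> 0 < sqrt s \<and> 0 < s \<and> s \<le> dl\<^sup>2"
  using h_pos h2_le_h dsq by auto

lemma m1: "s \<in> {h, h\<^sup>2} \<Longrightarrow> integrable lborel (\<lambda>y. normal_density 0 (sqrt s) y * y)
   \<and> (\<integral>y. normal_density 0 (sqrt s) y * y \<partial>lborel) = 0"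
  using integrable_normal_moment_nz_1[of "sqrt s" 0] integral_normal_moment_nz_1[of "sqrt s" 0] sq_s by auto

lemma m2: "s \<in> {h, h\<^sup>2} \<Longrightarrow> integrable lborel (\<lambda>y. normal_density 0 (sqrt s) y * y\<^sup>2)
   \<and> (\<integral>y. normal_density 0 (sqrt s) y * y\<^sup>2 \<partial>lborel) = s"
proof -
  assume s: "s \<in> {h, h\<^sup>2}"
  have "0 < sqrt s" using sq_s[OF s] by auto
  note A = integrable_normal_moment[OF this, of 0 2] integral_normal_moment_even[OF this, of 0 1]
  have "s \<ge> 0" using sq_s[OF s] by auto
  then show ?thesis using A by (simp add: power2_eq_square)
qed

lemma m3: "s \<in> {h, h\<^sup>2} \<Longrightarrow> integrable lborel (\<lambda>y. normal_density 0 (sqrt s) y * Rt y)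
   \<and> (\<integral>y. normal_density 0 (sqrt s) y * Rt y \<partial>lborel) \<le> gstar"
proof -
  assume s: "s \<in> {h, h\<^sup>2}"
  have ss: "0 < s" "s \<le> dl\<^sup>2" using sq_s[OF s] by auto
  have Rt_eq: "Rt = (\<lambda>y. y\<^sup>2 * indicator {y. dl < \<bar>y\<bar>} y)"
    by (auto simp: Rt_def fun_eq_iff indicator_def)
  note T = gauss_tail[OF ss(1) dl_pos ss(2)]
  have L: "ln (1/h) > 0" using h_pos h_lt1 by simp
  have dl2: "dl\<^sup>2 = 4 * h * ln (1/h)" unfolding delta_def using h_pos L by simp
  have "2 * ln (1/h) \<le> dl\<^sup>2 / (2 * s)"
  proof (cases "s = h")
    case True then show ?thesis using h_pos by (simp add: dl2)
  next
    case False
    then have "s = h\<^sup>2" using s by auto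
    then have "dl\<^sup>2 / (2 * s) = (4 * h * ln (1/h)) / (2 * h\<^sup>2)" by (simp only: dl2)
    also have "\<dots> = 2 * ln (1/h) / h" using h_pos by (simp add: power2_eq_square field_simps)
    finally have "dl\<^sup>2 / (2 * s) = 2 * ln (1/h) / h" .
    also have "2 * ln (1/h) \<le> 2 * ln (1/h) / h" using h_pos h_lt1 L by (simp add: le_divide_eq)
    finally show ?thesis using \<open>dl\<^sup>2 / (2 * s) = 2 * ln (1/h) / h\<close> by simp
  qed
  then have "exp (- dl\<^sup>2 / (2 * s)) \<le> exp (- (2 * ln (1/h)))" by simp
  also have "exp (- (2 * ln (1/h))) = h\<^sup>2"
  proof -
    have "- (2 * ln (1/h)) = ln h + ln h" using h_pos by (simp add: ln_div)
    then have "exp (- (2 * ln (1/h))) = exp (ln h + ln h)" by (rule arg_cong)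
    also have "\<dots> = h\<^sup>2" using h_pos by (simp only: exp_add exp_ln power2_eq_square)
    finally show ?thesis .
  qed
  finally have "exp (- dl\<^sup>2 / (2 * s)) \<le> h\<^sup>2" .
  then have "8 * exp 1 * dl\<^sup>2 * exp (- dl\<^sup>2 / (2 * s)) \<le> gstar"
    unfolding gstar_def by (intro mult_left_mono) auto
  then show ?thesis using T unfolding Rt_eq by auto
qed


lemma ib_phi_bd: "\<bar>ib n \<omega> * phi x\<bar> \<le> 18 * dl\<^sup>2"
proof (cases "ib n \<omega> = 0")
  case False
  then have "ib n \<omega> = 1" using ib_01 by auto
  then show ?thesis using phi_nonneg[of x] phi_le[of x] by simp
qed simp

lemma step_in: "step a b h x \<in> {h, h\<^sup>2}" unfolding step_eq by auto

lemma key_step: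
  "h\<^sup>2 * (\<integral>\<omega>. ib n \<omega> * (if big (X n \<omega>) then 0 else 1) \<partial>M)
     \<le> (\<integral>\<omega>. ib n \<omega> * phi (X (Suc n) \<omega>) \<partial>M) - (\<integral>\<omega>. ib n \<omega> * phi (X n \<omega>) \<partial>M) + 19 * gstar"
proof -
  define Xv where "Xv \<omega> = (\<lambda>k\<in>{..n}. X k \<omega>)" for \<omega>
  define Y where "Y \<omega> = X (Suc n) \<omega> - X n \<omega>" for \<omega>
  define \<Phi>1 where "\<Phi>1 v = IB n v * Lp (v n)" for v
  define \<Phi>2 where "\<Phi>2 v = IB n v * (if big (v n) then 0 else 1)" for v
  have m\<Phi>1: "\<Phi>1 \<in> borel_measurable (PiM {..n} (\<lambda>_. borel))" unfolding \<Phi>1_def[abs_def] by measurable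
  have m\<Phi>2: "\<Phi>2 \<in> borel_measurable (PiM {..n} (\<lambda>_. borel))" unfolding \<Phi>2_def[abs_def] by measurable
  have b\<Phi>1: "\<bar>\<Phi>1 v\<bar> \<le> 8 * dl" for v
    using IB_01[of n v] IB_1[of n v] Lp_bound[of "v n"] dl_pos unfolding \<Phi>1_def by auto
  have b\<Phi>2: "\<bar>\<Phi>2 v\<bar> \<le> 1" for v
    using IB_01[of n v] unfolding \<Phi>2_def by auto
  have b\<Phi>3: "\<bar>IB n v\<bar> \<le> 1" for v
    using IB_01[of n v] by auto
  have XvN: "Xv \<omega> n = X n \<omega>" for \<omega> by (simp add: Xv_def)
  have IBX: "IB n (Xv \<omega>) = ib n \<omega>" for \<omega> unfolding Xv_def by (rule IB_eq)
  note c1 = cond_step[OF m\<Phi>1 b\<Phi>1, of "\<lambda>y. y"]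
  note c2 = cond_step[OF m\<Phi>2 b\<Phi>2, of "\<lambda>y. y\<^sup>2"]
  note c3 = cond_step[OF IB_meas b\<Phi>3, of Rt]
  have i1: "integrable M (\<lambda>\<omega>. \<Phi>1 (Xv \<omega>) * Y \<omega>)"
    using c1(1) m1 unfolding Xv_def Y_def by auto
  have e1: "(\<integral>\<omega>. \<Phi>1 (Xv \<omega>) * Y \<omega> \<partial>M) = 0"
    using c1(3) m1[OF step_in] m1 unfolding Xv_def Y_def by auto
  have i2: "integrable M (\<lambda>\<omega>. \<Phi>2 (Xv \<omega>) * (Y \<omega>)\<^sup>2)"
    using c2(1) m2 unfolding Xv_def Y_def by auto
  have e2: "(\<integral>\<omega>. \<Phi>2 (Xv \<omega>) * (Y \<omega>)\<^sup>2 \<partial>M) = (\<integral>\<omega>. \<Phi>2 (Xv \<omega>) * step a b h (X n \<omega>) \<partial>M)"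
    using c2(3) m2[OF step_in] m2 unfolding Xv_def Y_def by auto
  also have "\<dots> = (\<integral>\<omega>. h\<^sup>2 * (ib n \<omega> * (if big (X n \<omega>) then 0 else 1)) \<partial>M)"
    by (rule Bochner_Integration.integral_cong) (auto simp: \<Phi>2_def IBX XvN step_eq)
  also have "\<dots> = h\<^sup>2 * (\<integral>\<omega>. ib n \<omega> * (if big (X n \<omega>) then 0 else 1) \<partial>M)" by simp
  finally have e2': "(\<integral>\<omega>. \<Phi>2 (Xv \<omega>) * (Y \<omega>)\<^sup>2 \<partial>M) = h\<^sup>2 * (\<integral>\<omega>. ib n \<omega> * (if big (X n \<omega>) then 0 else 1) \<partial>M)" .
  have i3: "integrable M (\<lambda>\<omega>. IB n (Xv \<omega>) * Rt (Y \<omega>))"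
    using c3(1) m3 unfolding Xv_def Y_def by auto
  have i3': "integrable M (\<lambda>\<omega>. IB n (Xv \<omega>) * (\<integral>y. normal_density 0 (sqrt (step a b h (X n \<omega>))) y * Rt y \<partial>lborel))"
    using c3(2) m3 unfolding Xv_def Y_def by auto
  have "(\<integral>\<omega>. IB n (Xv \<omega>) * Rt (Y \<omega>) \<partial>M)
      = (\<integral>\<omega>. IB n (Xv \<omega>) * (\<integral>y. normal_density 0 (sqrt (step a b h (X n \<omega>))) y * Rt y \<partial>lborel) \<partial>M)"
    using c3(3) m3 unfolding Xv_def Y_def by auto
  also have "\<dots> \<le> (\<integral>\<omega>. gstar \<partial>M)"
  proof (rule integral_mono[OF i3'])
    show "integrable M (\<lambda>\<omega>. gstar)" by simp
    fix \<omega>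
    have "(\<integral>y. normal_density 0 (sqrt (step a b h (X n \<omega>))) y * Rt y \<partial>lborel) \<le> gstar"
      using m3[OF step_in] by auto
    moreover have "0 \<le> (\<integral>y. normal_density 0 (sqrt (step a b h (X n \<omega>))) y * Rt y \<partial>lborel)"
      using Rt_nonneg by (intro Bochner_Integration.integral_nonneg) auto
    ultimately show "IB n (Xv \<omega>) * (\<integral>y. normal_density 0 (sqrt (step a b h (X n \<omega>))) y * Rt y \<partial>lborel) \<le> gstar"
      using IB_01[of n "Xv \<omega>"] by auto
  qed
  also have "\<dots> = gstar" by (simp add: prob_space)
  finally have e3: "(\<integral>\<omega>. IB n (Xv \<omega>) * Rt (Y \<omega>) \<partial>M) \<le> gstar" .
  have i0: "integrable M (\<lambda>\<omega>. ib n \<omega> * phi (X n \<omega>))"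
    by (rule int_bdd[where B="18*dl\<^sup>2"]) (use ib_phi_bd in auto)
  have i0': "integrable M (\<lambda>\<omega>. ib n \<omega> * phi (X (Suc n) \<omega>))"
    by (rule int_bdd[where B="18*dl\<^sup>2"]) (use ib_phi_bd in auto)
  have pw: "ib n \<omega> * phi (X n \<omega>) + \<Phi>1 (Xv \<omega>) * Y \<omega> + \<Phi>2 (Xv \<omega>) * (Y \<omega>)\<^sup>2 - 19 * (IB n (Xv \<omega>) * Rt (Y \<omega>))
       \<le> ib n \<omega> * phi (X (Suc n) \<omega>)" for \<omega>
  proof (cases "ib n \<omega> = 0")
    case True then show ?thesis by (simp add: \<Phi>1_def \<Phi>2_def IBX)
  next
    case False
    then have ib1: "ib n \<omega> = 1" using ib_01 by auto
    have "insd (X n \<omega>)" using IB_1[of n "Xv \<omega>"] False IBX XvN by simp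
    from phi_pw[OF this, of "Y \<omega>"] show ?thesis
      unfolding Y_def by (cases "big (X n \<omega>)") (simp_all add: ib1 \<Phi>1_def \<Phi>2_def IBX XvN)
  qed
  have "(\<integral>\<omega>. ib n \<omega> * phi (X n \<omega>) + \<Phi>1 (Xv \<omega>) * Y \<omega> + \<Phi>2 (Xv \<omega>) * (Y \<omega>)\<^sup>2 - 19 * (IB n (Xv \<omega>) * Rt (Y \<omega>)) \<partial>M)
       \<le> (\<integral>\<omega>. ib n \<omega> * phi (X (Suc n) \<omega>) \<partial>M)"
    by (rule integral_mono[OF _ i0' pw]) (intro Bochner_Integration.integrable_add Bochner_Integration.integrable_diff integrable_mult_right i0 i1 i2 i3)
  moreover have "(\<integral>\<omega>. ib n \<omega> * phi (X n \<omega>) + \<Phi>1 (Xv \<omega>) * Y \<omega> + \<Phi>2 (Xv \<omega>) * (Y \<omega>)\<^sup>2 - 19 * (IB n (Xv \<omega>) * Rt (Y \<omega>)) \<partial>M)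
     = (\<integral>\<omega>. ib n \<omega> * phi (X n \<omega>) \<partial>M) + (\<integral>\<omega>. \<Phi>1 (Xv \<omega>) * Y \<omega> \<partial>M) + (\<integral>\<omega>. \<Phi>2 (Xv \<omega>) * (Y \<omega>)\<^sup>2 \<partial>M)
        - 19 * (\<integral>\<omega>. IB n (Xv \<omega>) * Rt (Y \<omega>) \<partial>M)"
    by (subst Bochner_Integration.integral_diff Bochner_Integration.integral_add integral_mult_right_zero,
        (intro Bochner_Integration.integrable_add Bochner_Integration.integrable_diff integrable_mult_right i0 i1 i2 i3)+)+
      simp
  ultimately show ?thesis using e1 e2' e3 by linarith
qed


lemma ib_nonneg: "0 \<le> ib n \<omega>" unfolding ib_def by simp
lemma ib_le1: "ib n \<omega> \<le> 1" unfolding ib_def by simp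
lemma ib_abs: "\<bar>ib n \<omega>\<bar> \<le> 1" unfolding ib_def by simp
lemma ib_phi_nonneg: "0 \<le> ib n \<omega> * phi x" using ib_nonneg phi_nonneg by simp

lemma int_ib: "integrable M (ib n)"
  by (rule int_bdd[where B=1]) (use ib_abs in auto)

lemma int_ibphi: "integrable M (\<lambda>\<omega>. ib n \<omega> * phi (X m \<omega>))"
  by (rule int_bdd[where B="18*dl\<^sup>2"]) (use ib_phi_bd in auto)

lemma step2:
  "(\<integral>\<omega>. ib n \<omega> * phi (X (Suc n) \<omega>) \<partial>M)
    \<le> (\<integral>\<omega>. ib (Suc n) \<omega> * phi (X (Suc n) \<omega>) \<partial>M) + 18 * dl\<^sup>2 * ((\<integral>\<omega>. ib n \<omega> \<partial>M) - (\<integral>\<omega>. ib (Suc n) \<omega> \<partial>M))"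
proof -
  have pw: "ib n \<omega> * phi (X (Suc n) \<omega>) \<le> ib (Suc n) \<omega> * phi (X (Suc n) \<omega>) + 18 * dl\<^sup>2 * (ib n \<omega> - ib (Suc n) \<omega>)" for \<omega>
    using ib_01[of n \<omega>] ib_01[of "Suc n" \<omega>] ib_mono[of n \<omega>] phi_le[of "X (Suc n) \<omega>"] by auto
  have "(\<integral>\<omega>. ib n \<omega> * phi (X (Suc n) \<omega>) \<partial>M)
      \<le> (\<integral>\<omega>. ib (Suc n) \<omega> * phi (X (Suc n) \<omega>) + 18 * dl\<^sup>2 * (ib n \<omega> - ib (Suc n) \<omega>) \<partial>M)"
    by (rule integral_mono[OF int_ibphi _ pw]) (intro Bochner_Integration.integrable_add integrable_mult_right Bochner_Integration.integrable_diff int_ib int_ibphi)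
  also have "\<dots> = (\<integral>\<omega>. ib (Suc n) \<omega> * phi (X (Suc n) \<omega>) \<partial>M) + 18 * dl\<^sup>2 * ((\<integral>\<omega>. ib n \<omega> \<partial>M) - (\<integral>\<omega>. ib (Suc n) \<omega> \<partial>M))"
    by (simp add: Bochner_Integration.integral_add Bochner_Integration.integral_diff int_ib int_ibphi
       Bochner_Integration.integrable_diff)
  finally show ?thesis .
qed

lemma chain_sum:
  "h\<^sup>2 * (\<Sum>n<K. (\<integral>\<omega>. ib n \<omega> * (if big (X n \<omega>) then 0 else 1) \<partial>M)) \<le> 36 * dl\<^sup>2 + 19 * gstar * real K"
proof -
  define V where "V n = (\<integral>\<omega>. ib n \<omega> * phi (X n \<omega>) \<partial>M)" for n
  define q where "q n = (\<integral>\<omega>. ib n \<omega> \<partial>M)" for n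
  have each: "h\<^sup>2 * (\<integral>\<omega>. ib n \<omega> * (if big (X n \<omega>) then 0 else 1) \<partial>M)
     \<le> (V (Suc n) - V n) + 18 * dl\<^sup>2 * (q n - q (Suc n)) + 19 * gstar" for n
    using key_step[of n] step2[of n] unfolding V_def q_def by linarith
  have "h\<^sup>2 * (\<Sum>n<K. (\<integral>\<omega>. ib n \<omega> * (if big (X n \<omega>) then 0 else 1) \<partial>M))
      = (\<Sum>n<K. h\<^sup>2 * (\<integral>\<omega>. ib n \<omega> * (if big (X n \<omega>) then 0 else 1) \<partial>M))"
    by (simp add: sum_distrib_left)
  also have "\<dots> \<le> (\<Sum>n<K. (V (Suc n) - V n) + 18 * dl\<^sup>2 * (q n - q (Suc n)) + 19 * gstar)"
    by (rule sum_mono) (rule each)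
  also have "\<dots> = (V K - V 0) + 18 * dl\<^sup>2 * (q 0 - q K) + 19 * gstar * real K"
    by (simp add: sum.distrib sum_lessThan_telescope sum_lessThan_telescope' flip: sum_distrib_left)
  also have "\<dots> \<le> 36 * dl\<^sup>2 + 19 * gstar * real K"
  proof -
    have "V K \<le> 18 * dl\<^sup>2"
    proof -
      have "V K \<le> (\<integral>\<omega>. 18 * dl\<^sup>2 \<partial>M)" unfolding V_def
        by (rule integral_mono[OF int_ibphi]) (use ib_phi_bd in \<open>auto simp: abs_le_iff\<close>)
      then show ?thesis by (simp add: prob_space)
    qed
    moreover have "0 \<le> V 0" unfolding V_def
      by (intro Bochner_Integration.integral_nonneg ib_phi_nonneg)
    moreover have "q 0 \<le> 1"
    proof -
      have "q 0 \<le> (\<integral>\<omega>. 1 \<partial>M)" unfolding q_def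
        by (rule integral_mono[OF int_ib]) (use ib_le1 in auto)
      then show ?thesis by (simp add: prob_space)
    qed
    moreover have "0 \<le> q K" unfolding q_def
      by (intro Bochner_Integration.integral_nonneg ib_nonneg)
    moreover have "0 \<le> dl\<^sup>2" by simp
    ultimately have "18 * dl\<^sup>2 * (q 0 - q K) \<le> 18 * dl\<^sup>2 * 1"
      by (intro mult_left_mono) auto
    with \<open>V K \<le> 18 * dl\<^sup>2\<close> \<open>0 \<le> V 0\<close> show ?thesis by linarith
  qed
  finally show ?thesis .
qed

end



declare tmesh.simps(2)[simp del]

context wsetup
begin

definition "Kn = nat \<lceil>T / h\<^sup>2\<rceil> + 1"

lemma tK_gt: "T < t \<omega> Kn"
proof -
  have "T / h\<^sup>2 \<le> real (nat \<lceil>T / h\<^sup>2\<rceil>)" by linarith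
  then have "T / h\<^sup>2 < real Kn" unfolding Kn_def by simp
  then have "T < real Kn * h\<^sup>2" using h2_pos by (simp add: divide_less_eq)
  also have "\<dots> \<le> t \<omega> Kn" by (rule t_ge)
  finally show ?thesis .
qed

lemma t_unbounded: "\<exists>n. s < t \<omega> n"
proof -
  obtain n :: nat where "s / h\<^sup>2 < real n" using reals_Archimedean2 by blast
  then have "s < real n * h\<^sup>2" using h2_pos by (simp add: divide_less_eq)
  also have "\<dots> \<le> t \<omega> n" by (rule t_ge)
  finally show ?thesis by blast
qed

lemma t_less_iff: "t \<omega> m < t \<omega> n \<longleftrightarrow> m < n"
  using strict_mono_less[OF t_strict] .

lemma t_le_iff: "t \<omega> m \<le> t \<omega> n \<longleftrightarrow> m \<le> n"
  using strict_mono_less_eq[OF t_strict] .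

lemma interval_unique: "t \<omega> m \<le> s \<Longrightarrow> s < t \<omega> (Suc m) \<Longrightarrow> t \<omega> m' \<le> s \<Longrightarrow> s < t \<omega> (Suc m') \<Longrightarrow> m = m'"
proof (rule ccontr)
  assume H: "t \<omega> m \<le> s" "s < t \<omega> (Suc m)" "t \<omega> m' \<le> s" "s < t \<omega> (Suc m')" "m \<noteq> m'"
  show False
  proof (cases "m < m'")
    case True
    then have "t \<omega> (Suc m) \<le> t \<omega> m'" using t_le_iff by simp
    then show False using H by linarith
  next
    case False
    then have "m' < m" using H by simp
    then have "t \<omega> (Suc m') \<le> t \<omega> m" using t_le_iff by simp
    then show False using H by linarith
  qed
qed

lemma interval_exists: "0 \<le> s \<Longrightarrow> \<exists>m. t \<omega> m \<le> s \<and> s < t \<omega> (Suc m)"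
proof -
  assume s: "0 \<le> s"
  define n0 where "n0 = (LEAST n. s < t \<omega> n)"
  have n0: "s < t \<omega> n0" unfolding n0_def using t_unbounded by (rule LeastI_ex)
  have "n0 \<noteq> 0" using n0 s by (cases n0) auto
  then obtain m where m: "n0 = Suc m" by (cases n0) auto
  have "\<not> s < t \<omega> m" using not_less_Least[of m "\<lambda>n. s < t \<omega> n"] m unfolding n0_def by simp
  then show ?thesis using n0 m by (intro exI[of _ m]) auto
qed

lemma Wbar_eq: "t \<omega> m \<le> s \<Longrightarrow> s < t \<omega> (Suc m) \<Longrightarrow> Wbar a b W h s \<omega> = X m \<omega>"
proof -
  assume H: "t \<omega> m \<le> s" "s < t \<omega> (Suc m)"
  have "(THE n. t \<omega> n \<le> s \<and> s < t \<omega> (Suc n)) = m"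
    using H interval_unique by blast
  then show ?thesis unfolding Wbar_def X_def by simp
qed

lemma integrand_eq:
  assumes "0 \<le> s" "s < t \<omega> Kn"
  shows "1 / step a b h (Wbar a b W h s \<omega>)
     = (\<Sum>n<Kn. indicator {t \<omega> n..<t \<omega> (Suc n)} s / step a b h (X n \<omega>))"
proof -
  obtain m where m: "t \<omega> m \<le> s" "s < t \<omega> (Suc m)" using interval_exists[OF assms(1)] by blast
  have mK: "m < Kn" using m assms(2) t_less_iff by (meson le_less_trans)
  have "(\<Sum>n<Kn. indicator {t \<omega> n..<t \<omega> (Suc n)} s / step a b h (X n \<omega>))
      = (\<Sum>n<Kn. if n = m then 1 / step a b h (X n \<omega>) else 0)"
    using interval_unique[OF m] by (intro sum.cong) (auto simp: indicator_def m)
  also have "\<dots> = 1 / step a b h (X m \<omega>)" using mK by simp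
  finally show ?thesis using Wbar_eq[OF m] by simp
qed


definition "fnu n \<omega> = (if insd (X n \<omega>) then T else min T (t \<omega> n))"

lemma X0: "\<omega> \<in> space M \<Longrightarrow> X 0 \<omega> = 0"
  by (simp add: X_def W0)

lemma insd0: "\<omega> \<in> space M \<Longrightarrow> insd (X 0 \<omega>)"
  using X0 a_neg b_pos by (simp add: insd_def)

lemma Min_fnu_le: "n \<le> Kn \<Longrightarrow> Min ((\<lambda>n. fnu n \<omega>) ` {..Kn}) \<le> fnu n \<omega>"
  by (rule Min_le) auto

lemma nu_eq:
  assumes \<omega>: "\<omega> \<in> space M"
  shows "nu a b T W h \<omega> = Min ((\<lambda>n. fnu n \<omega>) ` {..Kn})"
proof -
  have Xe: "(W (t \<omega> n) \<omega> \<notin> {a<..<b}) = (\<not> insd (X n \<omega>))" for n by (simp add: X_def insd_def)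
  have Xe': "(W (t \<omega> n) \<omega> \<in> {a<..<b}) = (insd (X n \<omega>))" for n by (simp add: X_def insd_def)
  let ?F = "(\<lambda>n. fnu n \<omega>) ` {..Kn}"
  have fin: "finite ?F" "?F \<noteq> {}" by auto
  show ?thesis
  proof (cases "\<exists>n. \<not> insd (X n \<omega>)")
    case True
    define j where "j = (LEAST n. \<not> insd (X n \<omega>))"
    have j: "\<not> insd (X j \<omega>)" unfolding j_def using True by (rule LeastI_ex)
    have jle: "\<not> insd (X n \<omega>) \<Longrightarrow> j \<le> n" for n unfolding j_def by (rule Least_le)
    have jlt: "k < j \<Longrightarrow> insd (X k \<omega>)" for k using jle by force
    have S: "{t \<omega> n | n. W (t \<omega> n) \<omega> \<notin> {a<..<b} \<and> (\<forall>k<n. W (t \<omega> k) \<omega> \<in> {a<..<b})} = {t \<omega> j}"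
    proof -
      have "W (t \<omega> n) \<omega> \<notin> {a<..<b} \<and> (\<forall>k<n. W (t \<omega> k) \<omega> \<in> {a<..<b}) \<longleftrightarrow> n = j" for n
        unfolding Xe Xe' using j jle jlt by (metis le_neq_implies_less)
      then show ?thesis by auto
    qed
    have cond: "\<exists>n. W (t \<omega> n) \<omega> \<notin> {a<..<b}" using True Xe by simp
    have nu: "nu a b T W h \<omega> = min (t \<omega> j) T"
      unfolding nu_def S using cond by simp
    have lo: "min (t \<omega> j) T \<le> Min ?F"
    proof (rule Min.boundedI[OF fin])
      fix x assume "x \<in> ?F"
      then obtain n where n: "n \<le> Kn" "x = fnu n \<omega>" by auto
      show "min (t \<omega> j) T \<le> x"
      proof (cases "insd (X n \<omega>)")
        case True then show ?thesis using n by (simp add: fnu_def)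
      next
        case False
        then have "j \<le> n" by (rule jle)
        then have "t \<omega> j \<le> t \<omega> n" using t_le_iff by simp
        then show ?thesis using n False by (simp add: fnu_def)
      qed
    qed
    have up: "Min ?F \<le> min (t \<omega> j) T"
    proof (cases "j \<le> Kn")
      case True
      then have "Min ?F \<le> fnu j \<omega>" by (rule Min_fnu_le)
      then show ?thesis using j by (simp add: fnu_def min.commute)
    next
      case False
      then have "t \<omega> Kn \<le> t \<omega> j" using t_le_iff by simp
      then have "min (t \<omega> j) T = T" using tK_gt[of \<omega>] by simp
      moreover have "Min ?F \<le> fnu 0 \<omega>" by (rule Min_fnu_le) simp
      ultimately show ?thesis using insd0[OF \<omega>] by (simp add: fnu_def)
    qed
    show ?thesis unfolding nu using lo up by (rule antisym)
  next
    case False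
    then have "\<forall>n. insd (X n \<omega>)" by simp
    then have "?F = {T}" by (auto simp: fnu_def)
    moreover have "nu a b T W h \<omega> = T" unfolding nu_def Xe using False by simp
    ultimately show ?thesis by simp
  qed
qed

lemma fnu_meas[measurable]: "fnu n \<in> borel_measurable M"
  unfolding fnu_def[abs_def] insd_def by measurable

lemma nu_meas: "(\<lambda>\<omega>. nu a b T W h \<omega>) \<in> borel_measurable M"
proof -
  have "(\<lambda>\<omega>. Min ((\<lambda>n. fnu n \<omega>) ` {..Kn})) \<in> borel_measurable M"
    by (rule borel_measurable_Min) auto
  then show ?thesis by (rule measurable_cong[THEN iffD1, rotated]) (simp add: nu_eq)
qed

lemma nu_le_T: "\<omega> \<in> space M \<Longrightarrow> nu a b T W h \<omega> \<le> T"
  using Min_fnu_le[of 0 \<omega>] insd0 by (simp add: nu_eq fnu_def)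

lemma nu_nonneg: "\<omega> \<in> space M \<Longrightarrow> 0 \<le> nu a b T W h \<omega>"
  unfolding nu_eq
  by (rule Min.boundedI) (use T_pos t_nonneg in \<open>auto simp: fnu_def\<close>)

lemma before_nu:
  assumes \<omega>: "\<omega> \<in> space M" and lt: "t \<omega> n < nu a b T W h \<omega>"
  shows "ib n \<omega> = 1" "t \<omega> n < T"
proof -
  show "t \<omega> n < T" using lt nu_le_T[OF \<omega>] by simp
  show "ib n \<omega> = 1"
  proof (rule ccontr)
    assume "ib n \<omega> \<noteq> 1"
    then obtain k where k: "k \<le> n" "\<not> insd (X k \<omega>)" unfolding ib_def Bn_def by (auto split: if_splits)
    have kK: "k \<le> Kn"
    proof (rule ccontr)
      assume "\<not> k \<le> Kn"
      then have "t \<omega> Kn \<le> t \<omega> n" using k t_le_iff by simp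
      then show False using tK_gt[of \<omega>] lt nu_le_T[OF \<omega>] by simp
    qed
    have "nu a b T W h \<omega> \<le> fnu k \<omega>" unfolding nu_eq[OF \<omega>] using kK by (rule Min_fnu_le)
    also have "\<dots> \<le> t \<omega> k" using k by (simp add: fnu_def)
    also have "\<dots> \<le> t \<omega> n" using k t_le_iff by simp
    finally show False using lt by simp
  qed
qed


lemma meas_Ico:
  fixes c d u :: real
  assumes "0 \<le> c" "c \<le> d" "0 \<le> u"
  shows "measure lborel ({0..u} \<inter> {c..<d}) = max 0 (min u d - c)"
proof (cases "u < c")
  case True
  then have "{0..u} \<inter> {c..<d} = {}" by auto
  then show ?thesis using True by simp
next
  case False
  show ?thesis
  proof (cases "u < d")
    case True
    then have "{0..u} \<inter> {c..<d} = {c..u}" using False assms by auto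
    then show ?thesis using True False by simp
  next
    case F2: False
    then have "{0..u} \<inter> {c..<d} = {c..<d}" using False assms by auto
    then show ?thesis using F2 False assms by simp
  qed
qed

abbreviation "nuw \<equiv> nu a b T W h"

lemma cost_eq:
  assumes \<omega>: "\<omega> \<in> space M"
  shows "cost a b T W h \<omega> = (\<Sum>n<Kn. max 0 (min (nuw \<omega>) (t \<omega> (Suc n)) - t \<omega> n) / step a b h (X n \<omega>))"
proof -
  let ?u = "nuw \<omega>"
  let ?I = "\<lambda>n. {0..?u} \<inter> {t \<omega> n..<t \<omega> (Suc n)}"
  have u0: "0 \<le> ?u" using nu_nonneg[OF \<omega>] .
  have "cost a b T W h \<omega> = (LINT s:{0..?u}|lborel. 1 / step a b h (Wbar a b W h s \<omega>))"
    by (simp add: cost_def)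
  also have "\<dots> = (LINT s:{0..?u}|lborel. (\<Sum>n<Kn. indicator {t \<omega> n..<t \<omega> (Suc n)} s / step a b h (X n \<omega>)))"
  proof (rule set_lebesgue_integral_cong)
    show "{0..?u} \<in> sets lborel" by simp
    show "\<forall>s. s \<in> {0..?u} \<longrightarrow> 1 / step a b h (Wbar a b W h s \<omega>) = (\<Sum>n<Kn. indicator {t \<omega> n..<t \<omega> (Suc n)} s / step a b h (X n \<omega>))"
    proof (intro allI impI)
      fix s assume s: "s \<in> {0..?u}"
      have "s < t \<omega> Kn" using s nu_le_T[OF \<omega>] tK_gt[of \<omega>] by simp
      then show "1 / step a b h (Wbar a b W h s \<omega>) = (\<Sum>n<Kn. indicator {t \<omega> n..<t \<omega> (Suc n)} s / step a b h (X n \<omega>))"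
        using s by (intro integrand_eq) auto
    qed
  qed
  also have "\<dots> = (\<integral>s. (\<Sum>n<Kn. indicator (?I n) s / step a b h (X n \<omega>)) \<partial>lborel)"
    unfolding set_lebesgue_integral_def
    by (rule Bochner_Integration.integral_cong) (auto simp: sum_distrib_left indicator_def)
  also have "\<dots> = (\<Sum>n<Kn. (\<integral>s. indicator (?I n) s \<partial>lborel) / step a b h (X n \<omega>))"
  proof -
    have fin: "emeasure lborel (?I n) < \<infinity>" for n
      by (rule emeasure_bounded_finite) (auto intro: bounded_subset[OF bounded_closed_interval])
    have "integrable lborel (indicator (?I n) :: real \<Rightarrow> real)" for n
      using fin by (intro integrable_real_indicator) auto
    then show ?thesis by (simp add: Bochner_Integration.integral_sum)
  qed
  also have "\<dots> = (\<Sum>n<Kn. max 0 (min ?u (t \<omega> (Suc n)) - t \<omega> n) / step a b h (X n \<omega>))"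
  proof (rule sum.cong[OF refl])
    fix n
    have "(\<integral>s. indicator (?I n) s \<partial>lborel) = measure lborel (?I n)" by simp
    also have "\<dots> = max 0 (min ?u (t \<omega> (Suc n)) - t \<omega> n)"
      by (rule meas_Ico) (use t_nonneg t_less u0 in \<open>auto intro: less_imp_le\<close>)
    finally show "(\<integral>s. indicator (?I n) s \<partial>lborel) / step a b h (X n \<omega>) = max 0 (min ?u (t \<omega> (Suc n)) - t \<omega> n) / step a b h (X n \<omega>)"
      by simp
  qed
  finally show ?thesis .
qed

lemma cost_term:
  assumes \<omega>: "\<omega> \<in> space M"
  shows "0 \<le> max 0 (min (nuw \<omega>) (t \<omega> (Suc n)) - t \<omega> n) / step a b h (X n \<omega>)"
    and "max 0 (min (nuw \<omega>) (t \<omega> (Suc n)) - t \<omega> n) / step a b h (X n \<omega>)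
          \<le> ib n \<omega> * (if big (X n \<omega>) then 0 else 1) + (if t \<omega> n < T \<and> big (X n \<omega>) then 1 else 0)"
proof -
  have sp: "0 < step a b h (X n \<omega>)" by (rule step_pos)
  show "0 \<le> max 0 (min (nuw \<omega>) (t \<omega> (Suc n)) - t \<omega> n) / step a b h (X n \<omega>)"
    using sp by simp
  show "max 0 (min (nuw \<omega>) (t \<omega> (Suc n)) - t \<omega> n) / step a b h (X n \<omega>)
          \<le> ib n \<omega> * (if big (X n \<omega>) then 0 else 1) + (if t \<omega> n < T \<and> big (X n \<omega>) then 1 else 0)"
  proof (cases "t \<omega> n < nuw \<omega>")
    case True
    have "max 0 (min (nuw \<omega>) (t \<omega> (Suc n)) - t \<omega> n) \<le> step a b h (X n \<omega>)"
      using t_Suc[of \<omega> n] sp by simp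
    then have "max 0 (min (nuw \<omega>) (t \<omega> (Suc n)) - t \<omega> n) / step a b h (X n \<omega>) \<le> 1"
      using sp by simp
    then show ?thesis using before_nu[OF \<omega> True] by auto
  next
    case False
    then have "max 0 (min (nuw \<omega>) (t \<omega> (Suc n)) - t \<omega> n) = 0" by simp
    then show ?thesis using ib_nonneg[of n \<omega>] by simp
  qed
qed

lemma big_count_aux: "h * (\<Sum>n<N. if big (X n \<omega>) then 1 else 0) \<le> t \<omega> N"
proof (induction N)
  case (Suc N)
  have "h * (if big (X N \<omega>) then 1 else 0) \<le> step a b h (X N \<omega>)"
    using step_pos[of "X N \<omega>"] by (simp add: step_eq)
  then show ?case using Suc t_Suc[of \<omega> N] by (simp add: distrib_left)
qed simp

lemma big_count: "h * (\<Sum>n<N. if t \<omega> n < T \<and> big (X n \<omega>) then 1 else 0) \<le> T + h"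
proof (induction N)
  case 0 then show ?case using T_pos h_pos by simp
next
  case (Suc N)
  show ?case
  proof (cases "t \<omega> N < T \<and> big (X N \<omega>)")
    case True
    have "(\<Sum>n<N. if t \<omega> n < T \<and> big (X n \<omega>) then 1 else 0) \<le> (\<Sum>n<N. if big (X n \<omega>) then 1 else (0::real))"
      by (rule sum_mono) auto
    then have "h * (\<Sum>n<N. if t \<omega> n < T \<and> big (X n \<omega>) then 1 else 0) \<le> t \<omega> N"
      using big_count_aux[where N=N and \<omega>=\<omega>] h_pos by (meson mult_left_mono order.trans less_imp_le)
    then show ?thesis using True by (simp add: distrib_left)
  next
    case False
    then have "(\<Sum>n<Suc N. if t \<omega> n < T \<and> big (X n \<omega>) then 1 else (0::real))
       = (\<Sum>n<N. if t \<omega> n < T \<and> big (X n \<omega>) then 1 else 0)" by simp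
    then show ?thesis using Suc by simp
  qed
qed

end



context wsetup
begin

lemma step_meas[measurable]: "(\<lambda>x. step a b h x) \<in> borel_measurable borel"
  unfolding step_def dist_bd_def by measurable

lemma cost_meas: "cost a b T W h \<in> borel_measurable M"
proof -
  have [measurable]: "(\<lambda>\<omega>. nu a b T W h \<omega>) \<in> borel_measurable M" by (rule nu_meas)
  have "(\<lambda>\<omega>. \<Sum>n<Kn. max 0 (min (nuw \<omega>) (t \<omega> (Suc n)) - t \<omega> n) / step a b h (X n \<omega>)) \<in> borel_measurable M"
    by measurable
  then show ?thesis by (rule measurable_cong[THEN iffD1, rotated]) (simp add: cost_eq)
qed

definition "Af n \<omega> = ib n \<omega> * (if big (X n \<omega>) then 0 else 1)"
definition "Bf \<omega> = (\<Sum>n<Kn. if t \<omega> n < T \<and> big (X n \<omega>) then 1 else (0::real))"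

lemma Af_meas[measurable]: "Af n \<in> borel_measurable M"
  unfolding Af_def[abs_def] by measurable

lemma Af_bd: "0 \<le> Af n \<omega> \<and> Af n \<omega> \<le> 1"
  using ib_01[of n \<omega>] unfolding Af_def by auto

lemma Bf_meas[measurable]: "Bf \<in> borel_measurable M"
  unfolding Bf_def[abs_def] insd_def by measurable

lemma Bf_bd: "0 \<le> Bf \<omega> \<and> Bf \<omega> \<le> real Kn"
proof -
  have "Bf \<omega> \<le> (\<Sum>n<Kn. 1)" unfolding Bf_def by (rule sum_mono) auto
  moreover have "0 \<le> Bf \<omega>" unfolding Bf_def by (rule sum_nonneg) auto
  ultimately show ?thesis by simp
qed

lemma cost_bd: "\<omega> \<in> space M \<Longrightarrow> 0 \<le> cost a b T W h \<omega> \<and> cost a b T W h \<omega> \<le> (\<Sum>n<Kn. Af n \<omega>) + Bf \<omega>"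
proof -
  assume \<omega>: "\<omega> \<in> space M"
  have "cost a b T W h \<omega> \<le> (\<Sum>n<Kn. Af n \<omega> + (if t \<omega> n < T \<and> big (X n \<omega>) then 1 else 0))"
    unfolding cost_eq[OF \<omega>] Af_def by (rule sum_mono) (rule cost_term(2)[OF \<omega>])
  moreover have "0 \<le> cost a b T W h \<omega>"
    unfolding cost_eq[OF \<omega>] by (rule sum_nonneg) (rule cost_term(1)[OF \<omega>])
  ultimately show ?thesis by (simp add: Bf_def sum.distrib)
qed

lemma cost_integrable: "integrable M (cost a b T W h)"
proof (rule int_bdd[OF cost_meas])
  fix \<omega> assume \<omega>: "\<omega> \<in> space M"
  have "(\<Sum>n<Kn. Af n \<omega>) \<le> (\<Sum>n<Kn. 1)" by (rule sum_mono) (use Af_bd in auto)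
  then show "\<bar>cost a b T W h \<omega>\<bar> \<le> 2 * real Kn"
    using cost_bd[OF \<omega>] Bf_bd[of \<omega>] by auto
qed

lemma cost_expect:
  "0 \<le> integral\<^sup>L M (cost a b T W h)
   \<and> integral\<^sup>L M (cost a b T W h) \<le> (36 * dl\<^sup>2 + 19 * gstar * real Kn) / h\<^sup>2 + (T + h) / h"
proof
  show "0 \<le> integral\<^sup>L M (cost a b T W h)"
    using cost_bd by (intro Bochner_Integration.integral_nonneg) auto
  have iA: "integrable M (Af n)" for n by (rule int_bdd[where B=1]) (use Af_bd in auto)
  have iB: "integrable M Bf" by (rule int_bdd[where B="real Kn"]) (use Bf_bd in auto)
  have "integral\<^sup>L M (cost a b T W h) \<le> (\<integral>\<omega>. (\<Sum>n<Kn. Af n \<omega>) + Bf \<omega> \<partial>M)"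
    by (rule integral_mono[OF cost_integrable]) (use iA iB cost_bd in auto)
  also have "\<dots> = (\<Sum>n<Kn. integral\<^sup>L M (Af n)) + integral\<^sup>L M Bf"
    using iA iB by (simp add: Bochner_Integration.integral_sum)
  also have "(\<Sum>n<Kn. integral\<^sup>L M (Af n)) \<le> (36 * dl\<^sup>2 + 19 * gstar * real Kn) / h\<^sup>2"
    using chain_sum[of Kn] h2_pos unfolding Af_def by (simp add: le_divide_eq mult.commute)
  also have "integral\<^sup>L M Bf \<le> (T + h) / h"
  proof -
    have "integral\<^sup>L M Bf \<le> (\<integral>\<omega>. (T + h) / h \<partial>M)"
    proof (rule integral_mono[OF iB])
      fix \<omega>
      show "Bf \<omega> \<le> (T + h) / h" using big_count[where N=Kn and \<omega>=\<omega>] h_pos unfolding Bf_def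
        by (simp add: le_divide_eq mult.commute)
    qed simp
    then show ?thesis by (simp add: prob_space)
  qed
  finally show "integral\<^sup>L M (cost a b T W h) \<le> (36 * dl\<^sup>2 + 19 * gstar * real Kn) / h\<^sup>2 + (T + h) / h"
    by simp
qed

lemma cost_final:
  assumes L1: "1 \<le> ln (1/h)"
  shows "integral\<^sup>L M (cost a b T W h) \<le> (144 + 608 * exp 1 * (T + 2) + T + 1) * (ln (1/h) / h)"
proof -
  define L where "L = ln (1/h)"
  have Lpos: "1 \<le> L" using L1 by (simp add: L_def)
  have "0 \<le> h * L" using h_pos Lpos by simp
  then have dl2: "dl\<^sup>2 = 4 * h * L" unfolding delta_def L_def using h_pos by simp
  have K: "real Kn \<le> T / h\<^sup>2 + 2"
  proof -
    have nn: "0 \<le> T / h\<^sup>2" using T_pos h2_pos by simp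
    then have "real (nat \<lceil>T / h\<^sup>2\<rceil>) = real_of_int \<lceil>T / h\<^sup>2\<rceil>" by simp
    also have "\<dots> \<le> T / h\<^sup>2 + 1" by (rule of_int_ceiling_le_add_one)
    finally have "real (nat \<lceil>T / h\<^sup>2\<rceil>) \<le> T / h\<^sup>2 + 1" .
    then show ?thesis unfolding Kn_def by simp
  qed
  have g: "gstar = 32 * exp 1 * h^3 * L" unfolding gstar_def dl2 by (simp add: power2_eq_square power3_eq_cube)
  have t1: "36 * dl\<^sup>2 / h\<^sup>2 = 144 * (L / h)" unfolding dl2 using h_pos by (simp add: power2_eq_square field_simps)
  have t2: "19 * gstar * real Kn / h\<^sup>2 \<le> 608 * exp 1 * (T + 2) * (L / h)"
  proof -
    have "19 * gstar * real Kn / h\<^sup>2 = 608 * exp 1 * L * h * real Kn"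
      unfolding g using h_pos by (simp add: power2_eq_square power3_eq_cube field_simps)
    also have "\<dots> \<le> 608 * exp 1 * L * h * (T / h\<^sup>2 + 2)"
      using K h_pos Lpos by (intro mult_left_mono) auto
    also have "\<dots> = 608 * exp 1 * (T + 2 * h\<^sup>2) * (L / h)"
      using h_pos by (simp add: power2_eq_square field_simps)
    also have "\<dots> \<le> 608 * exp 1 * (T + 2) * (L / h)"
    proof -
      have "h\<^sup>2 \<le> 1" using h2_le_h h_lt1 by simp
      then show ?thesis using h_pos Lpos T_pos by (intro mult_right_mono mult_left_mono) auto
    qed
    finally show ?thesis .
  qed
  have t3: "(T + h) / h \<le> (T + 1) * (L / h)"
  proof -
    have "(T + h) / h \<le> (T + 1) / h" using h_pos h_lt1 by (simp add: divide_right_mono)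
    also have "\<dots> \<le> (T + 1) * L / h" using Lpos T_pos h_pos by (simp add: divide_right_mono)
    finally show ?thesis by simp
  qed
  have "integral\<^sup>L M (cost a b T W h) \<le> (36 * dl\<^sup>2 + 19 * gstar * real Kn) / h\<^sup>2 + (T + h) / h"
    using cost_expect by simp
  also have "(36 * dl\<^sup>2 + 19 * gstar * real Kn) / h\<^sup>2 = 36 * dl\<^sup>2 / h\<^sup>2 + 19 * gstar * real Kn / h\<^sup>2"
    by (simp add: add_divide_distrib)
  finally have fin: "integral\<^sup>L M (cost a b T W h) \<le> 36 * dl\<^sup>2 / h\<^sup>2 + 19 * gstar * real Kn / h\<^sup>2 + (T + h) / h" .
  have eq: "(144 + 608*exp 1*(T+2) + T + 1) * (L/h) = 144*(L/h) + 608*exp 1*(T+2)*(L/h) + (T+1)*(L/h)"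
    by (simp add: algebra_simps add_divide_distrib)
  have "integral\<^sup>L M (cost a b T W h) \<le> (144 + 608*exp 1*(T+2) + T + 1) * (L/h)"
    unfolding eq using fin t1 t2 t3 by linarith
  then show ?thesis unfolding L_def .
qed

end



lemma delta_lim: "(delta \<longlongrightarrow> 0) (at_right 0)"
  unfolding delta_def[abs_def] by real_asymp

lemma rho_bdd:
  assumes h: "0 < h" and h1: "h < 1" and b: "0 < b"
  shows "bdd_above ((\<lambda>(t, w, m). rho t w m) ` ({h..T} \<times> {b - delta h..<b} \<times> {b - delta h..b + delta h}))"
proof (rule bdd_aboveI2)
  fix x assume "x \<in> {h..T} \<times> {b - delta h..<b} \<times> {b - delta h..b + delta h}"
  then obtain t w m where x: "x = (t, w, m)" and t: "h \<le> t" and w: "b - delta h \<le> w" "w < b"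
    and m: "b - delta h \<le> m" "m \<le> b + delta h" by auto
  have "0 \<le> ln (1/h)" using h h1 by simp
  then have d0: "0 \<le> delta h" unfolding delta_def using h by simp
  have tp: "0 < t" using t h by simp
  have hp: "0 < h powr (3/2)" using h by simp
  have pm: "h powr (3/2) \<le> t powr (3/2)" using t h by (intro powr_mono2) auto
  show "(case x of (t, w, m) \<Rightarrow> rho t w m) \<le> sqrt (2 / pi) * (b + 3 * delta h) / h powr (3/2)"
  proof (cases "0 \<le> m \<and> w \<le> m")
    case True
    define A where "A = 2 * m - w"
    have A0: "0 \<le> A" using True by (simp add: A_def)
    have Ab: "A \<le> b + 3 * delta h" using w m by (simp add: A_def)
    have e: "exp (- A\<^sup>2 / (2 * t)) \<le> 1" using tp by simp
    have "rho t w m = sqrt (2 / pi) * A / t powr (3/2) * exp (- A\<^sup>2 / (2 * t))"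
      using True by (simp add: rho_def A_def)
    also have "\<dots> \<le> sqrt (2 / pi) * A / t powr (3/2) * 1"
      using e A0 tp by (intro mult_left_mono) auto
    also have "\<dots> \<le> sqrt (2 / pi) * A / h powr (3/2)"
      using A0 hp pm by (simp, intro divide_left_mono mult_nonneg_nonneg mult_pos_pos) auto
    also have "\<dots> \<le> sqrt (2 / pi) * (b + 3 * delta h) / h powr (3/2)"
      using Ab hp by (intro divide_right_mono mult_left_mono) auto
    finally show ?thesis using x by simp
  next
    case False
    then have "rho t w m = 0" by (simp only: rho_def if_not_P[OF False] if_False)
    moreover have "0 \<le> sqrt (2 / pi) * (b + 3 * delta h) / h powr (3/2)" using b d0 hp by simp
    ultimately show ?thesis using x by simp
  qed
qed


theorem mainTheorem9:
  fixes M :: "'a measure" and W :: "real \<Rightarrow> 'a \<Rightarrow> real" and a b T :: real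
  assumes "wiener_process M W" and "a < 0" and "0 < b" and "0 < T"
  shows "(\<forall>\<^sub>F h in at_right 0.
            bdd_above ((\<lambda>(t, w, m). rho t w m) `
              ({h..T} \<times> {b - delta h..<b} \<times> {b - delta h..b + delta h})))
       \<and> (\<forall>\<^sub>F h in at_right 0. integrable M (cost a b T W h))
       \<and> (\<lambda>h. integral\<^sup>L M (cost a b T W h)) \<in> O[at_right 0](\<lambda>h. \<bar>ln h\<bar> / h)"
proof -
  have e1: "\<forall>\<^sub>F h in at_right (0::real). 0 < h \<and> h < exp (-1)"
    unfolding eventually_at_right_field by (intro exI[of _ "exp (-1)"]) auto
  have e2: "\<forall>\<^sub>F h in at_right (0::real). delta h < (b - a) / 4"
    using order_tendstoD(2)[OF delta_lim, of "(b - a) / 4"] \<open>a < 0\<close> \<open>0 < b\<close> by simp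
  define P where "P h \<longleftrightarrow> 0 < h \<and> h < exp (-1) \<and> delta h < (b - a) / 4" for h
  have ev: "\<forall>\<^sub>F h in at_right (0::real). P h"
    using eventually_conj[OF e1 e2] unfolding P_def by simp
  define C where "C = 144 + 608 * exp 1 * (T + 2) + T + 1"
  have key: "wsetup M W a b T h \<and> 1 \<le> ln (1/h) \<and> h < 1" if "P h" for h
  proof -
    have h: "0 < h" "h < exp (-1)" "delta h < (b - a) / 4" using that by (auto simp: P_def)
    have "exp (-1) < (1::real)" by simp
    then have h1: "h < 1" using h by linarith
    have "ln h < ln (exp (-1))" using h by (subst ln_less_cancel_iff) auto
    then have L: "1 \<le> ln (1/h)" using h by (simp add: ln_div)
    have "0 \<le> h * ln (1/h)" using h h1 by (intro mult_nonneg_nonneg) auto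
    then have "(delta h)\<^sup>2 = 4 * h * ln (1/h)" unfolding delta_def using h by simp
    then have dsq: "h \<le> (delta h)\<^sup>2" using h L by (smt (verit) mult_le_cancel_left1 mult_pos_pos)
    have "wsetup M W a b T h"
      by unfold_locales (use assms h h1 dsq in auto)
    then show ?thesis using L h1 by simp
  qed
  have c1: "\<forall>\<^sub>F h in at_right 0.
            bdd_above ((\<lambda>(t, w, m). rho t w m) `
              ({h..T} \<times> {b - delta h..<b} \<times> {b - delta h..b + delta h}))"
  proof (rule eventually_mono[OF ev])
    fix h assume "P h"
    then have "0 < h" "h < 1" using key by (auto simp: P_def)
    then show "bdd_above ((\<lambda>(t, w, m). rho t w m) `
              ({h..T} \<times> {b - delta h..<b} \<times> {b - delta h..b + delta h}))"
      using \<open>0 < b\<close> by (intro rho_bdd) auto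
  qed
  have c2: "\<forall>\<^sub>F h in at_right 0. integrable M (cost a b T W h)"
    by (rule eventually_mono[OF ev]) (use key wsetup.cost_integrable in blast)
  have c3: "(\<lambda>h. integral\<^sup>L M (cost a b T W h)) \<in> O[at_right 0](\<lambda>h. \<bar>ln h\<bar> / h)"
  proof (rule bigoI[where c=C])
    show "\<forall>\<^sub>F h in at_right 0. norm (integral\<^sup>L M (cost a b T W h)) \<le> C * norm (\<bar>ln h\<bar> / h)"
      using ev
    proof (rule eventually_mono)
      fix h assume Ph: "P h"
      then have ws: "wsetup M W a b T h" and L: "1 \<le> ln (1/h)" and h1: "h < 1" using key by auto
      have h0: "0 < h" using Ph by (simp add: P_def)
      have nn: "0 \<le> integral\<^sup>L M (cost a b T W h)" using wsetup.cost_expect[OF ws] by simp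
      have le: "integral\<^sup>L M (cost a b T W h) \<le> C * (ln (1/h) / h)"
        using wsetup.cost_final[OF ws L] unfolding C_def .
      have "\<bar>ln h\<bar> = ln (1/h)" using h0 h1 by (simp add: ln_div)
      then have "norm (\<bar>ln h\<bar> / h) = ln (1/h) / h" using h0 L by simp
      then show "norm (integral\<^sup>L M (cost a b T W h)) \<le> C * norm (\<bar>ln h\<bar> / h)"
        using nn le by simp
    qed
  qed
  show ?thesis using c1 c2 c3 by blast
qed

end
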